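(* Consider $N$ spin-$1/2$ particles on $L^2(\mathbb R^{3N})\otimes(\mathbb C^2)^{\otimes N}$ with Pauli Hamiltonian $$H=\sum_{j=1}^N\frac1{2m_j}\Big[(\mathbf p_j-q_j\boldsymbol A(\mathbf x_j))^2-q_j\boldsymbol\sigma_j\cdot\boldsymbol B(\mathbf x_j)\Big],$$ where $\boldsymbol A:\mathbb R^3\to\mathbb R^3$ is smooth, $\boldsymbol B=\nabla\times\boldsymbol A$, $\mathbf p_j=-i\nabla_{\mathbf x_j}$, and $\boldsymbol\sigma_j=(\sigma_x,\sigma_y,\sigma_z)$ acting on the $j$-th spin factor. Let $\mathcal M_m\in O(3)$ with $\mathcal M_m^2=I$ satisfy $\det(\mathcal M_m)\,\mathcal M_m\boldsymbol B(\mathcal M_m\mathbf x)=-\boldsymbol B(\mathbf x)$ for all $\mathbf x\in\mathbb R^3$. Let $U_c$ be the unitary $(U_c\psi)(\mathbf x_1,\dots,\mathbf x_N)=\psi(\mathcal M_m\mathbf x_1,\dots,\mathcal M_m\mathbf x_N)$ and $K$ complex conjugation. Then there exists a unitary $U_s$ on $\mathbb C^2$ such that the antiunitary operator $\mathcal T=(U_c\otimes U_s\otimes\cdots\otimes U_s)K$ is time reversal invariance-yielding for $H$: $\mathcal T H\mathcal T^{-1}$ equals $H$ with $\boldsymbol A$ replaced by $\boldsymbol A+\nabla G$ for some smooth $G:\mathbb R^3\to\mathbb R$ (a gauge transformation, which leaves $\boldsymbol B$ unchanged).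
   Context: The condition $\det(\mathcal M_m)\mathcal M_m\boldsymbol B(\mathcal M_m\mathbf x)=-\boldsymbol B(\mathbf x)$ is the compatibility condition between the coordinate transformation $\mathcal M_m$ and the magnetic field. Under $\mathcal T$, positions and momenta transform as $\mathbf x_j\mapsto\mathcal M_m\mathbf x_j$, $\mathbf p_j\mapsto-\mathcal M_m\mathbf p_j$. *)

theory Defs
  imports "HOL-Analysis.Analysis"
begin

definition dirderiv :: "'a::real_normed_vector \<Rightarrow> ('a \<Rightarrow> 'b::real_normed_vector) \<Rightarrow> 'a \<Rightarrow> 'b" where
  "dirderiv v f x = vector_derivative (\<lambda>t. f (x + t *\<^sub>R v)) (at 0)"

fun iter_dirderiv :: "'a::real_normed_vector list \<Rightarrow> ('a \<Rightarrow> 'b::real_normed_vector) \<Rightarrow> 'a \<Rightarrow> 'b" where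
  "iter_dirderiv [] f = f"
| "iter_dirderiv (v # vs) f = dirderiv v (iter_dirderiv vs f)"

definition smooth :: "('a::euclidean_space \<Rightarrow> 'b::real_normed_vector) \<Rightarrow> bool" where
  "smooth f \<longleftrightarrow> (\<forall>vs. continuous_on UNIV (iter_dirderiv vs f) \<and>
      (\<forall>v x. (\<lambda>t. iter_dirderiv vs f (x + t *\<^sub>R v)) differentiable (at 0)))"

definition pd3 :: "3 \<Rightarrow> (real^3 \<Rightarrow> 'b::real_normed_vector) \<Rightarrow> real^3 \<Rightarrow> 'b" where
  "pd3 k f = dirderiv (axis k 1) f"

definition grad :: "(real^3 \<Rightarrow> real) \<Rightarrow> real^3 \<Rightarrow> real^3" where
  "grad G x = (\<chi> k. pd3 k G x)"

definition curl :: "(real^3 \<Rightarrow> real^3) \<Rightarrow> real^3 \<Rightarrow> real^3" where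
  "curl A x = vector [ pd3 2 (\<lambda>y. A y $ 3) x - pd3 3 (\<lambda>y. A y $ 2) x,
                       pd3 3 (\<lambda>y. A y $ 1) x - pd3 1 (\<lambda>y. A y $ 3) x,
                       pd3 1 (\<lambda>y. A y $ 2) x - pd3 2 (\<lambda>y. A y $ 1) x ]"

text \<open>Particles are indexed by a finite type 'n (N = CARD('n)). A configuration is
  x :: real^3^'n (x $ j is the position of particle j). The spin space (C^2)^{\<otimes>N}
  is identified with functions ('n \<Rightarrow> bool) \<Rightarrow> complex, where True is spin up
  (first basis vector of C^2) and False is spin down.\<close>

type_synonym ('n) wf = "real^3^'n \<Rightarrow> ('n \<Rightarrow> bool) \<Rightarrow> complex"

text \<open>Pauli matrices, entries indexed by (row, column), True = first index.\<close>
definition pauli :: "3 \<Rightarrow> bool \<Rightarrow> bool \<Rightarrow> complex" where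
  "pauli k a b =
     (if k = 1 then (if a = b then 0 else 1)
      else if k = 2 then (if a = b then 0 else if a then - \<i> else \<i>)
      else (if a = b then (if a then 1 else -1) else 0))"

definition pdj :: "'n::finite \<Rightarrow> 3 \<Rightarrow> 'n wf \<Rightarrow> 'n wf" where
  "pdj j k \<psi> x s = dirderiv (\<chi> i. if i = j then axis k 1 else 0) (\<lambda>y. \<psi> y s) x"

definition kinmom :: "(real^3 \<Rightarrow> real^3) \<Rightarrow> real \<Rightarrow> 'n::finite \<Rightarrow> 3 \<Rightarrow> 'n wf \<Rightarrow> 'n wf" where
  "kinmom A q j k \<psi> x s = - \<i> * pdj j k \<psi> x s - complex_of_real (q * (A (x $ j) $ k)) * \<psi> x s"

definition spinB :: "(real^3 \<Rightarrow> real^3) \<Rightarrow> 'n::finite \<Rightarrow> 'n wf \<Rightarrow> 'n wf" where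
  "spinB B j \<psi> x s = (\<Sum>k\<in>UNIV. \<Sum>b\<in>UNIV.
      complex_of_real (B (x $ j) $ k) * pauli k (s j) b * \<psi> x (s(j := b)))"

definition pauliH :: "('n::finite \<Rightarrow> real) \<Rightarrow> ('n \<Rightarrow> real) \<Rightarrow> (real^3 \<Rightarrow> real^3) \<Rightarrow> 'n wf \<Rightarrow> 'n wf" where
  "pauliH m q A \<psi> x s = (\<Sum>j\<in>UNIV. complex_of_real (1 / (2 * m j)) *
      ((\<Sum>k\<in>UNIV. kinmom A (q j) j k (kinmom A (q j) j k \<psi>) x s)
       - complex_of_real (q j) * spinB (curl A) j \<psi> x s))"

definition unitary2 :: "(bool \<Rightarrow> bool \<Rightarrow> complex) \<Rightarrow> bool" where
  "unitary2 U \<longleftrightarrow> (\<forall>a b. (\<Sum>c\<in>UNIV. cnj (U c a) * U c b) = (if a = b then 1 else 0))"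

text \<open>The antiunitary T = (U_c \<otimes> U_s \<otimes> ... \<otimes> U_s) K.\<close>
definition Top :: "real^3^3 \<Rightarrow> (bool \<Rightarrow> bool \<Rightarrow> complex) \<Rightarrow> 'n::finite wf \<Rightarrow> 'n wf" where
  "Top M Us \<psi> x s = (\<Sum>s'\<in>UNIV. (\<Prod>j\<in>UNIV. Us (s j) (s' j)) *
      cnj (\<psi> (\<chi> j. M *v (x $ j)) s'))"

end

theory Submission
  imports Defs
begin

definition ldiff :: "('a::real_normed_vector \<Rightarrow> 'b::real_normed_vector) \<Rightarrow> bool" where
  "ldiff f \<longleftrightarrow> (\<forall>x v. (\<lambda>t. f (x + t *\<^sub>R v)) differentiable (at 0))"

lemma ldiff_hvd:
  assumes "ldiff f"
  shows "((\<lambda>t. f (x + t *\<^sub>R v)) has_vector_derivative dirderiv v f (x + t0 *\<^sub>R v)) (at t0)"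
proof -
  let ?h = "\<lambda>u. f ((x + t0 *\<^sub>R v) + u *\<^sub>R v)"
  have "?h differentiable (at 0)" using assms unfolding ldiff_def by blast
  hence h: "(?h has_vector_derivative dirderiv v f (x + t0 *\<^sub>R v)) (at 0)"
    unfolding dirderiv_def by (simp add: vector_derivative_works[symmetric])
  have s: "((\<lambda>t. t - t0) has_vector_derivative 1) (at t0)"
    by (rule has_vector_derivative_eq_rhs[OF has_vector_derivative_diff[OF has_vector_derivative_id has_vector_derivative_const]]) simp
  have "((?h \<circ> (\<lambda>t. t - t0)) has_vector_derivative (1 *\<^sub>R dirderiv v f (x + t0 *\<^sub>R v))) (at t0)"
    using vector_diff_chain_at[OF s] h by simp
  moreover have "?h \<circ> (\<lambda>t. t - t0) = (\<lambda>t. f (x + t *\<^sub>R v))"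
    by (auto simp: algebra_simps fun_eq_iff)
  ultimately show ?thesis by simp
qed

lemma ldiff_hvd0:
  assumes "ldiff f"
  shows "((\<lambda>t. f (x + t *\<^sub>R v)) has_vector_derivative dirderiv v f x) (at 0)"
  using ldiff_hvd[OF assms, of x v 0] by simp

lemma dirderiv_eqI:
  "((\<lambda>t. f (x + t *\<^sub>R v)) has_vector_derivative D) (at 0) \<Longrightarrow> dirderiv v f x = D"
  unfolding dirderiv_def by (rule vector_derivative_at)

lemma ldiffI:
  assumes "\<And>x v. ((\<lambda>t. f (x + t *\<^sub>R v)) has_vector_derivative D x v) (at 0)"
  shows "ldiff f"
  unfolding ldiff_def using assms differentiableI_vector by blast

lemma ldiff_blin:
  assumes "ldiff f" "bounded_linear L"
  shows "ldiff (\<lambda>y. L (f y))" and "dirderiv v (\<lambda>y. L (f y)) x = L (dirderiv v f x)"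
proof -
  have *: "\<And>x v. ((\<lambda>t. L (f (x + t *\<^sub>R v))) has_vector_derivative L (dirderiv v f x)) (at 0)"
    using bounded_linear.has_vector_derivative[OF assms(2) ldiff_hvd0[OF assms(1)]] .
  show "ldiff (\<lambda>y. L (f y))" by (rule ldiffI[OF *])
  show "dirderiv v (\<lambda>y. L (f y)) x = L (dirderiv v f x)" by (rule dirderiv_eqI[OF *])
qed

lemma ldiff_add:
  assumes "ldiff f" "ldiff g"
  shows "ldiff (\<lambda>y. f y + g y)" and "dirderiv v (\<lambda>y. f y + g y) x = dirderiv v f x + dirderiv v g x"
proof -
  have *: "\<And>x v. ((\<lambda>t. f (x + t *\<^sub>R v) + g (x + t *\<^sub>R v)) has_vector_derivative dirderiv v f x + dirderiv v g x) (at 0)"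
    by (intro has_vector_derivative_add ldiff_hvd0 assms)
  show "ldiff (\<lambda>y. f y + g y)" by (rule ldiffI[OF *])
  show "dirderiv v (\<lambda>y. f y + g y) x = dirderiv v f x + dirderiv v g x" by (rule dirderiv_eqI[OF *])
qed

lemma ldiff_diff:
  assumes "ldiff f" "ldiff g"
  shows "ldiff (\<lambda>y. f y - g y)" and "dirderiv v (\<lambda>y. f y - g y) x = dirderiv v f x - dirderiv v g x"
proof -
  have *: "\<And>x v. ((\<lambda>t. f (x + t *\<^sub>R v) - g (x + t *\<^sub>R v)) has_vector_derivative dirderiv v f x - dirderiv v g x) (at 0)"
    by (intro has_vector_derivative_diff ldiff_hvd0 assms)
  show "ldiff (\<lambda>y. f y - g y)" by (rule ldiffI[OF *])
  show "dirderiv v (\<lambda>y. f y - g y) x = dirderiv v f x - dirderiv v g x" by (rule dirderiv_eqI[OF *])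
qed

lemma ldiff_const: "ldiff (\<lambda>y. c)" and dirderiv_const: "dirderiv v (\<lambda>y. c) x = 0"
proof -
  have *: "\<And>x v. ((\<lambda>t. c) has_vector_derivative 0) (at 0)" by simp
  show "ldiff (\<lambda>y. c)" by (rule ldiffI[OF *])
  show "dirderiv v (\<lambda>y. c) x = 0" by (rule dirderiv_eqI[OF *])
qed

lemma ldiff_sum:
  assumes "\<And>i. i \<in> I \<Longrightarrow> ldiff (f i)"
  shows "ldiff (\<lambda>y. \<Sum>i\<in>I. f i y)" and "dirderiv v (\<lambda>y. \<Sum>i\<in>I. f i y) x = (\<Sum>i\<in>I. dirderiv v (f i) x)"
proof -
  have *: "\<And>x v. ((\<lambda>t. \<Sum>i\<in>I. f i (x + t *\<^sub>R v)) has_vector_derivative (\<Sum>i\<in>I. dirderiv v (f i) x)) (at 0)"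
    by (intro has_vector_derivative_sum ldiff_hvd0 assms)
  show "ldiff (\<lambda>y. \<Sum>i\<in>I. f i y)" by (rule ldiffI[OF *])
  show "dirderiv v (\<lambda>y. \<Sum>i\<in>I. f i y) x = (\<Sum>i\<in>I. dirderiv v (f i) x)" by (rule dirderiv_eqI[OF *])
qed

lemma ldiff_mult:
  fixes f g :: "'a::real_normed_vector \<Rightarrow> 'b::real_normed_algebra"
  assumes "ldiff f" "ldiff g"
  shows "ldiff (\<lambda>y. f y * g y)" and "dirderiv v (\<lambda>y. f y * g y) x = f x * dirderiv v g x + dirderiv v f x * g x"
proof -
  have *: "\<And>x v. ((\<lambda>t. f (x + t *\<^sub>R v) * g (x + t *\<^sub>R v)) has_vector_derivative f x * dirderiv v g x + dirderiv v f x * g x) (at 0)"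
    using has_vector_derivative_mult[OF ldiff_hvd0[OF assms(1)] ldiff_hvd0[OF assms(2)]] by simp
  show "ldiff (\<lambda>y. f y * g y)" by (rule ldiffI[OF *])
  show "dirderiv v (\<lambda>y. f y * g y) x = f x * dirderiv v g x + dirderiv v f x * g x" by (rule dirderiv_eqI[OF *])
qed

lemma ldiff_comp_lin:
  assumes "ldiff f" "linear T"
  shows "ldiff (\<lambda>y. f (T y))"
proof -
  have *: "\<And>x v. ((\<lambda>t. f (T (x + t *\<^sub>R v))) has_vector_derivative dirderiv (T v) f (T x)) (at 0)"
    using ldiff_hvd0[OF assms(1)] by (simp add: linear_add[OF assms(2)] linear_scale[OF assms(2)])
  show ?thesis by (rule ldiffI[OF *])
qed

lemma dirderiv_comp_lin:
  assumes "linear T"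
  shows "dirderiv v (\<lambda>y. f (T y)) x = dirderiv (T v) f (T x)"
  unfolding dirderiv_def by (simp add: linear_add[OF assms] linear_scale[OF assms])

lemma dirderiv_scale:
  assumes "ldiff f"
  shows "dirderiv (c *\<^sub>R v) f x = c *\<^sub>R dirderiv v f x"
proof -
  have s: "((\<lambda>t. c * t) has_vector_derivative c) (at 0)"
    using has_vector_derivative_mult_right[OF has_vector_derivative_id, of c] by simp
  have "(((\<lambda>u. f (x + u *\<^sub>R v)) \<circ> (\<lambda>t. c * t)) has_vector_derivative (c *\<^sub>R dirderiv v f x)) (at 0)"
    using vector_diff_chain_at[OF s] ldiff_hvd0[OF assms, of x v] by simp
  moreover have "(\<lambda>u. f (x + u *\<^sub>R v)) \<circ> (\<lambda>t. c * t) = (\<lambda>t. f (x + t *\<^sub>R (c *\<^sub>R v)))"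
    by (auto simp: fun_eq_iff mult.commute)
  ultimately show ?thesis by (intro dirderiv_eqI) simp
qed

lemma mvt_seg:
  fixes k :: "real \<Rightarrow> 'b::real_normed_vector"
  assumes "\<And>s. s \<in> closed_segment 0 t \<Longrightarrow> (k has_vector_derivative k' s) (at s)"
    and "\<And>s. s \<in> closed_segment 0 t \<Longrightarrow> norm (k' s) \<le> B"
  shows "norm (k t - k 0) \<le> B * \<bar>t\<bar>"
proof -
  have "norm (k' 0) \<le> B" using assms(2)[of 0] by simp
  hence B0: "0 \<le> B" by (rule order_trans[OF norm_ge_zero])
  have "norm (k t - k 0) \<le> B * norm (t - 0)"
  proof (rule differentiable_bound[of "closed_segment 0 t" k "\<lambda>s h. h *\<^sub>R k' s" B t 0])
    show "convex (closed_segment 0 t)" by simp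
    fix s assume s: "s \<in> closed_segment 0 t"
    show "(k has_derivative (\<lambda>h. h *\<^sub>R k' s)) (at s within closed_segment 0 t)"
      using assms(1)[OF s] has_vector_derivative_at_within unfolding has_vector_derivative_def by blast
    show "onorm (\<lambda>h. h *\<^sub>R k' s) \<le> B"
      by (rule onorm_bound[OF B0]) (use assms(2)[OF s] in \<open>auto simp: mult.commute[of B] intro: mult_left_mono\<close>)
  qed auto
  thus ?thesis by simp
qed

lemma dirderiv_add_dir:
  assumes ld: "ldiff f" and cw: "continuous_on UNIV (dirderiv w f)"
  shows "dirderiv (v + w) f x = dirderiv v f x + dirderiv w f x"
proof -
  define Dv where "Dv = dirderiv v f x"
  define Dw where "Dw = dirderiv w f x"
  have hv: "((\<lambda>t. f (x + t *\<^sub>R v)) has_derivative (\<lambda>h. h *\<^sub>R Dv)) (at 0)"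
    using ldiff_hvd0[OF ld, of x v] unfolding Dv_def has_vector_derivative_def .
  have "((\<lambda>t. f (x + t *\<^sub>R (v + w))) has_derivative (\<lambda>h. h *\<^sub>R (Dv + Dw))) (at 0)"
    unfolding has_derivative_at_alt
  proof (intro conjI allI impI)
    show "bounded_linear (\<lambda>h. h *\<^sub>R (Dv + Dw))" by (rule bounded_linear_scaleR_left)
    fix e :: real assume e: "e > 0"
    obtain d1 where d1: "d1 > 0" and
      d1': "\<And>y. norm (y - 0) < d1 \<Longrightarrow> norm (f (x + y *\<^sub>R v) - f (x + 0 *\<^sub>R v) - (y - 0) *\<^sub>R Dv) \<le> e/2 * norm (y - 0)"
      using hv[unfolded has_derivative_at_alt] e by (metis half_gt_zero)
    obtain dl where dl: "dl > 0" and
      dl': "\<And>y. dist y x < dl \<Longrightarrow> dist (dirderiv w f y) Dw < e/2"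
      using cw[unfolded continuous_on_iff] e unfolding Dw_def by (metis UNIV_I half_gt_zero)
    define d2 where "d2 = dl / (norm v + norm w + 1)"
    have d2: "d2 > 0" unfolding d2_def using dl by (simp add: add_nonneg_pos)
    show "\<exists>d>0. \<forall>y. norm (y - 0) < d \<longrightarrow>
      norm (f (x + y *\<^sub>R (v + w)) - f (x + 0 *\<^sub>R (v + w)) - (y - 0) *\<^sub>R (Dv + Dw)) \<le> e * norm (y - 0)"
    proof (intro exI[of _ "min d1 d2"] conjI allI impI)
      show "min d1 d2 > 0" using d1 d2 by simp
      fix t :: real assume t: "norm (t - 0) < min d1 d2"
      define k where "k = (\<lambda>s. f ((x + t *\<^sub>R v) + s *\<^sub>R w) - s *\<^sub>R Dw)"
      have kd: "(k has_vector_derivative (dirderiv w f ((x + t *\<^sub>R v) + s *\<^sub>R w) - Dw)) (at s)" for s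
        unfolding k_def
        by (rule has_vector_derivative_eq_rhs[OF has_vector_derivative_diff[OF ldiff_hvd[OF ld]
              has_vector_derivative_scaleR[OF DERIV_ident has_vector_derivative_const]]]) simp
      have kb: "norm (dirderiv w f ((x + t *\<^sub>R v) + s *\<^sub>R w) - Dw) \<le> e/2"
        if s: "s \<in> closed_segment 0 t" for s
      proof -
        have "\<bar>s\<bar> \<le> \<bar>t\<bar>" using s by (auto simp: closed_segment_eq_real_ivl split: if_splits)
        have "norm (t *\<^sub>R v + s *\<^sub>R w) \<le> \<bar>t\<bar> * norm v + \<bar>s\<bar> * norm w"
          by (metis norm_scaleR norm_triangle_ineq)
        also have "\<dots> \<le> \<bar>t\<bar> * norm v + \<bar>t\<bar> * norm w"
          using \<open>\<bar>s\<bar> \<le> \<bar>t\<bar>\<close> by (simp add: mult_right_mono)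
        also have "\<dots> \<le> \<bar>t\<bar> * (norm v + norm w + 1)" by (simp add: algebra_simps)
        also have "\<dots> < d2 * (norm v + norm w + 1)"
          using t by (intro mult_strict_right_mono) (auto simp: add_nonneg_pos)
        also have "\<dots> = dl"
        proof -
          have "norm v + norm w + 1 > 0" by (simp add: add_nonneg_pos)
          thus ?thesis unfolding d2_def by simp
        qed
        finally have "dist ((x + t *\<^sub>R v) + s *\<^sub>R w) x < dl" by (simp add: dist_norm add.assoc)
        from dl'[OF this] show ?thesis by (simp add: dist_norm)
      qed
      have m1: "norm (k t - k 0) \<le> e/2 * \<bar>t\<bar>"
        by (rule mvt_seg[OF kd kb])
      have m2: "norm (f (x + t *\<^sub>R v) - f x - t *\<^sub>R Dv) \<le> e/2 * \<bar>t\<bar>"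
        using d1'[of t] t by simp
      have eq: "f (x + t *\<^sub>R (v + w)) - f (x + 0 *\<^sub>R (v + w)) - (t - 0) *\<^sub>R (Dv + Dw)
          = (k t - k 0) + (f (x + t *\<^sub>R v) - f x - t *\<^sub>R Dv)"
        unfolding k_def by (simp add: algebra_simps)
      have "norm (f (x + t *\<^sub>R (v + w)) - f (x + 0 *\<^sub>R (v + w)) - (t - 0) *\<^sub>R (Dv + Dw))
          \<le> norm (k t - k 0) + norm (f (x + t *\<^sub>R v) - f x - t *\<^sub>R Dv)"
        unfolding eq by (rule norm_triangle_ineq)
      also have "\<dots> \<le> e * norm (t - 0)" using m1 m2 by simp
      finally show "norm (f (x + t *\<^sub>R (v + w)) - f (x + 0 *\<^sub>R (v + w)) - (t - 0) *\<^sub>R (Dv + Dw))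
          \<le> e * norm (t - 0)" .
    qed
  qed
  hence "((\<lambda>t. f (x + t *\<^sub>R (v + w))) has_vector_derivative (Dv + Dw)) (at 0)"
    unfolding has_vector_derivative_def .
  thus ?thesis unfolding Dv_def Dw_def by (rule dirderiv_eqI)
qed

lemma dirderiv_linear:
  assumes "ldiff f" "\<And>w. continuous_on UNIV (dirderiv w f)"
  shows "linear (\<lambda>v. dirderiv v f x)"
  by (rule linearI) (simp_all add: dirderiv_add_dir[OF assms] dirderiv_scale[OF assms(1)])

lemma iter_snoc: "iter_dirderiv (vs @ [v]) f = iter_dirderiv vs (dirderiv v f)"
  by (induction vs) auto

lemma smooth_iff: "smooth f \<longleftrightarrow> (\<forall>vs. continuous_on UNIV (iter_dirderiv vs f) \<and> ldiff (iter_dirderiv vs f))"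
  unfolding smooth_def ldiff_def by (intro iff_allI) blast

lemma smooth_ldiff: "smooth f \<Longrightarrow> ldiff f"
  unfolding smooth_iff by (metis iter_dirderiv.simps(1))

lemma smooth_cont: "smooth f \<Longrightarrow> continuous_on UNIV f"
  unfolding smooth_iff by (metis iter_dirderiv.simps(1))

lemma smooth_dd: "smooth f \<Longrightarrow> smooth (dirderiv v f)"
  unfolding smooth_iff by (metis iter_snoc)

lemma smooth_dcont: "smooth f \<Longrightarrow> continuous_on UNIV (dirderiv w f)"
  using smooth_cont[OF smooth_dd] by blast

lemma smooth_linear: "smooth f \<Longrightarrow> linear (\<lambda>v. dirderiv v f x)"
  by (intro dirderiv_linear smooth_ldiff smooth_dcont)

lemma smooth_blin:
  assumes "smooth f" "bounded_linear L"
  shows "smooth (\<lambda>y. L (f y))"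
proof -
  have eq: "iter_dirderiv vs (\<lambda>y. L (f y)) = (\<lambda>y. L (iter_dirderiv vs f y))" for vs
  proof (induction vs)
    case (Cons v vs)
    have "ldiff (iter_dirderiv vs f)" using assms(1) unfolding smooth_iff by blast
    then show ?case by (intro ext) (simp add: Cons.IH ldiff_blin(2)[OF _ assms(2)])
  qed simp
  show ?thesis unfolding smooth_iff eq
  proof
    fix vs
    have "continuous_on UNIV (iter_dirderiv vs f)" "ldiff (iter_dirderiv vs f)"
      using assms(1) unfolding smooth_iff by blast+
    thus "continuous_on UNIV (\<lambda>y. L (iter_dirderiv vs f y)) \<and> ldiff (\<lambda>y. L (iter_dirderiv vs f y))"
      using bounded_linear.continuous_on[OF assms(2)] ldiff_blin(1)[OF _ assms(2)] by blast
  qed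
qed

lemma smooth_add:
  assumes "smooth f" "smooth g"
  shows "smooth (\<lambda>y. f y + g y)"
proof -
  have eq: "iter_dirderiv vs (\<lambda>y. f y + g y) = (\<lambda>y. iter_dirderiv vs f y + iter_dirderiv vs g y)" for vs
  proof (induction vs)
    case (Cons v vs)
    have "ldiff (iter_dirderiv vs f)" "ldiff (iter_dirderiv vs g)" using assms unfolding smooth_iff by blast+
    then show ?case by (intro ext) (simp add: Cons.IH ldiff_add(2))
  qed simp
  show ?thesis unfolding smooth_iff eq
  proof
    fix vs
    have "continuous_on UNIV (iter_dirderiv vs f)" "ldiff (iter_dirderiv vs f)"
      "continuous_on UNIV (iter_dirderiv vs g)" "ldiff (iter_dirderiv vs g)"
      using assms unfolding smooth_iff by blast+
    thus "continuous_on UNIV (\<lambda>y. iter_dirderiv vs f y + iter_dirderiv vs g y) \<and> ldiff (\<lambda>y. iter_dirderiv vs f y + iter_dirderiv vs g y)"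
      using ldiff_add(1) continuous_on_add by blast
  qed
qed

lemma smooth_comp_lin:
  assumes "smooth f" "linear T"
  shows "smooth (\<lambda>y. f (T y))"
proof -
  have eq: "iter_dirderiv vs (\<lambda>y. f (T y)) = (\<lambda>y. iter_dirderiv (map T vs) f (T y))" for vs
  proof (induction vs)
    case (Cons v vs)
    then show ?case by (intro ext) (simp add: Cons.IH dirderiv_comp_lin[OF assms(2)])
  qed simp
  have cT: "continuous_on UNIV T" using assms(2) by (simp add: linear_continuous_on linear_conv_bounded_linear)
  show ?thesis unfolding smooth_iff eq
  proof
    fix vs
    have "continuous_on UNIV (iter_dirderiv (map T vs) f)" "ldiff (iter_dirderiv (map T vs) f)"
      using assms unfolding smooth_iff by blast+
    thus "continuous_on UNIV (\<lambda>y. iter_dirderiv (map T vs) f (T y)) \<and> ldiff (\<lambda>y. iter_dirderiv (map T vs) f (T y))"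
      using ldiff_comp_lin[OF _ assms(2)] continuous_on_compose2[OF _ cT] by blast
  qed
qed

lemma hvd_line: "((\<lambda>s. x + s *\<^sub>R v) has_vector_derivative v) (at s0 within S)"
  by (rule has_vector_derivative_eq_rhs[OF has_vector_derivative_add[OF has_vector_derivative_const
        has_vector_derivative_scaleR[OF DERIV_ident has_vector_derivative_const]]]) simp

lemma poincare:
  fixes F :: "'a::euclidean_space \<Rightarrow> 'a"
  assumes sF: "smooth F" and sym: "\<And>x u w. dirderiv u F x \<bullet> w = dirderiv w F x \<bullet> u"
  defines "G \<equiv> \<lambda>x. integral (cbox 0 (1::real)) (\<lambda>t. F (t *\<^sub>R x) \<bullet> x)"
  shows poincare_hvd: "\<And>x v. ((\<lambda>s. G (x + s *\<^sub>R v)) has_vector_derivative (F x \<bullet> v)) (at 0)"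
    and poincare_smooth: "smooth G"
proof -
  have ldF: "ldiff F" using sF by (rule smooth_ldiff)
  have cF: "continuous_on UNIV F" using sF by (rule smooth_cont)
  have cdF: "continuous_on UNIV (dirderiv w F)" for w using sF by (rule smooth_dcont)
  show hvd: "((\<lambda>s. G (x + s *\<^sub>R v)) has_vector_derivative (F x \<bullet> v)) (at 0)" for x v
  proof -
    define fx where "fx = (\<lambda>s t. (t *\<^sub>R dirderiv v F (t *\<^sub>R (x + s *\<^sub>R v))) \<bullet> (x + s *\<^sub>R v)
        + F (t *\<^sub>R (x + s *\<^sub>R v)) \<bullet> v)"
    have d1: "((\<lambda>s. F (t *\<^sub>R (x + s *\<^sub>R v))) has_vector_derivative t *\<^sub>R dirderiv v F (t *\<^sub>R (x + s0 *\<^sub>R v))) (at s0)"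
      for s0 t :: real
    proof -
      have "((\<lambda>s. F (t *\<^sub>R x + s *\<^sub>R (t *\<^sub>R v))) has_vector_derivative dirderiv (t *\<^sub>R v) F (t *\<^sub>R x + s0 *\<^sub>R (t *\<^sub>R v))) (at s0)"
        by (rule ldiff_hvd[OF ldF])
      thus ?thesis by (simp add: dirderiv_scale[OF ldF] scaleR_add_right mult.commute)
    qed
    have d2: "((\<lambda>s. F (t *\<^sub>R (x + s *\<^sub>R v)) \<bullet> (x + s *\<^sub>R v)) has_vector_derivative fx s0 t) (at s0 within UNIV)"
      for s0 t :: real
      using bounded_bilinear.has_vector_derivative[OF bounded_bilinear_inner d1[of t s0] hvd_line[of x v s0 UNIV]]
      unfolding fx_def by (simp add: add.commute)
    have cfx: "continuous_on (UNIV \<times> cbox 0 1) (\<lambda>(s, t). fx s t)"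
      unfolding fx_def split_beta
      by (intro continuous_intros continuous_on_compose2[OF cdF] continuous_on_compose2[OF cF]) auto
    have intg: "(\<lambda>t. F (t *\<^sub>R (x + s *\<^sub>R v)) \<bullet> (x + s *\<^sub>R v)) integrable_on cbox 0 1" for s
      by (intro integrable_continuous continuous_intros continuous_on_compose2[OF cF]) auto
    have L: "((\<lambda>s. integral (cbox 0 1) (\<lambda>t. F (t *\<^sub>R (x + s *\<^sub>R v)) \<bullet> (x + s *\<^sub>R v))) has_vector_derivative
        integral (cbox 0 1) (fx 0)) (at 0 within UNIV)"
      by (rule leibniz_rule_vector_derivative[OF d2 intg cfx]) auto
    define H where "H = (\<lambda>t::real. t * (F (t *\<^sub>R x) \<bullet> v))"
    have Hd: "(H has_vector_derivative fx 0 t) (at t within {0..1})" for t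
    proof -
      have "((\<lambda>t. F (0 + t *\<^sub>R x)) has_vector_derivative dirderiv x F (0 + t *\<^sub>R x)) (at t within {0..1})"
        using ldiff_hvd[OF ldF] has_vector_derivative_at_within by blast
      hence "((\<lambda>t. F (t *\<^sub>R x) \<bullet> v) has_vector_derivative dirderiv x F (t *\<^sub>R x) \<bullet> v) (at t within {0..1})"
        using bounded_linear.has_vector_derivative[OF bounded_linear_inner_left] by fastforce
      from has_vector_derivative_mult[OF has_vector_derivative_id this]
      have "(H has_vector_derivative t * (dirderiv x F (t *\<^sub>R x) \<bullet> v) + 1 * (F (t *\<^sub>R x) \<bullet> v)) (at t within {0..1})"
        unfolding H_def .
      moreover have "fx 0 t = t * (dirderiv x F (t *\<^sub>R x) \<bullet> v) + 1 * (F (t *\<^sub>R x) \<bullet> v)"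
        unfolding fx_def using sym[of v "t *\<^sub>R x" x] by simp
      ultimately show ?thesis by simp
    qed
    have "(fx 0 has_integral (H 1 - H 0)) {0..1}"
      by (rule fundamental_theorem_of_calculus) (auto intro: Hd)
    hence "integral (cbox 0 1) (fx 0) = F x \<bullet> v"
      unfolding H_def by (simp add: integral_unique)
    with L show ?thesis unfolding G_def by simp
  qed
  have ldG: "ldiff G" by (rule ldiffI[OF hvd])
  have dG: "dirderiv v G = (\<lambda>x. F x \<bullet> v)" for v
    by (rule ext, rule dirderiv_eqI[OF hvd])
  have cG: "continuous_on UNIV G"
    unfolding G_def
    by (rule integral_continuous_on_param)
      (auto intro!: continuous_intros continuous_on_compose2[OF cF] simp: split_beta)
  show "smooth G"
    unfolding smooth_iff
  proof
    fix vs :: "'a list"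
    show "continuous_on UNIV (iter_dirderiv vs G) \<and> ldiff (iter_dirderiv vs G)"
    proof (cases vs rule: rev_cases)
      case Nil
      then show ?thesis using cG ldG by simp
    next
      case (snoc ws v)
      have "smooth (\<lambda>x. F x \<bullet> v)" by (rule smooth_blin[OF sF bounded_linear_inner_left])
      then show ?thesis unfolding snoc iter_snoc dG smooth_iff by blast
    qed
  qed
qed

definition Phi :: "real^3^3 \<Rightarrow> real^3^'n::finite \<Rightarrow> real^3^'n" where
  "Phi M x = (\<chi> j. M *v (x $ j))"

definition Ej :: "'n::finite \<Rightarrow> 3 \<Rightarrow> real^3^'n" where
  "Ej j k = (\<chi> i. if i = j then axis k 1 else 0)"

lemma linear_Phi: "linear (Phi M)"
  by (rule linearI) (simp_all add: Phi_def vec_eq_iff matrix_vector_right_distrib matrix_vector_mult_scaleR)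

lemma blin_Phi: "bounded_linear (Phi M)"
  using linear_Phi linear_conv_bounded_linear by blast

lemma Top_apply: "Top M Us \<psi> x s = (\<Sum>s'\<in>UNIV. (\<Prod>j\<in>UNIV. Us (s j) (s' j)) * cnj (\<psi> (Phi M x) s'))"
  by (simp add: Top_def Phi_def)

lemma MMv: "M ** M = mat 1 \<Longrightarrow> M *v (M *v x) = x"
  by (simp add: matrix_vector_mul_assoc)

lemma Phi_nth: "Phi M x $ j = M *v (x $ j)"
  by (simp add: Phi_def)

lemma Ej_nth: "Ej j k $ j = axis k 1"
  by (simp add: Ej_def)

lemma blin_cmult_cnj: "bounded_linear (\<lambda>z. c * cnj z :: complex)"
  using bounded_linear_compose[OF bounded_linear_mult_right bounded_linear_cnj] by (simp add: o_def)

lemma ldiff_Top: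
  assumes "\<And>s. ldiff (\<lambda>y. \<psi> y s)"
  shows "ldiff (\<lambda>y. Top M Us \<psi> y s)"
    and "dirderiv v (\<lambda>y. Top M Us \<psi> y s) x =
         (\<Sum>s'\<in>UNIV. (\<Prod>j\<in>UNIV. Us (s j) (s' j)) * cnj (dirderiv (Phi M v) (\<lambda>y. \<psi> y s') (Phi M x)))"
proof -
  have l1: "ldiff (\<lambda>y. \<psi> (Phi M y) s')" for s'
    using ldiff_comp_lin[OF assms linear_Phi] .
  have l2: "ldiff (\<lambda>y. (\<Prod>j\<in>UNIV. Us (s j) (s' j)) * cnj (\<psi> (Phi M y) s'))" for s'
    using ldiff_blin(1)[OF l1 blin_cmult_cnj] .
  show "ldiff (\<lambda>y. Top M Us \<psi> y s)"
    unfolding Top_apply using ldiff_sum(1)[OF l2] .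
  show "dirderiv v (\<lambda>y. Top M Us \<psi> y s) x =
         (\<Sum>s'\<in>UNIV. (\<Prod>j\<in>UNIV. Us (s j) (s' j)) * cnj (dirderiv (Phi M v) (\<lambda>y. \<psi> y s') (Phi M x)))"
  proof -
    have c: "dirderiv v (\<lambda>y. \<psi> (Phi M y) s') x = dirderiv (Phi M v) (\<lambda>y. \<psi> y s') (Phi M x)" for s'
      using dirderiv_comp_lin[OF linear_Phi, of v "\<lambda>z. \<psi> z s'"] by simp
    show ?thesis
      unfolding Top_apply ldiff_sum(2)[OF l2]
      by (simp add: ldiff_blin(2)[OF l1 blin_cmult_cnj] c)
  qed
qed

lemma Top_kin:
  assumes MM: "M ** M = mat 1" and ld: "\<And>s. ldiff (\<lambda>y. \<psi> y s)"
  shows "kinmom B q j k (Top M Us \<psi>) x s =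
    Top M Us (\<lambda>y s. \<i> * dirderiv (Phi M (Ej j k)) (\<lambda>z. \<psi> z s) y
                       - complex_of_real (q * B (M *v (y $ j)) $ k) * \<psi> y s) x s"
proof -
  have pd: "pdj j k (Top M Us \<psi>) x s =
     (\<Sum>s'\<in>UNIV. (\<Prod>j\<in>UNIV. Us (s j) (s' j)) * cnj (dirderiv (Phi M (Ej j k)) (\<lambda>y. \<psi> y s') (Phi M x)))"
    unfolding pdj_def using ldiff_Top(2)[OF ld] by (simp add: Ej_def)
  show ?thesis
    unfolding kinmom_def pd
    by (simp add: Top_apply Phi_nth MMv[OF MM] sum_distrib_left sum_subtractf[symmetric] algebra_simps)
qed

lemma blin_coef: "bounded_linear (\<lambda>w::real^3. complex_of_real (q * (N *v w) $ k))"
proof -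
  have "linear (\<lambda>w::real^3. complex_of_real (q * (N *v w) $ k))"
    by (rule linearI; simp only: matrix_vector_right_distrib matrix_vector_mult_scaleR vector_scaleR_component vector_add_component)
      (simp_all add: algebra_simps scaleR_conv_of_real)
  thus ?thesis using linear_conv_bounded_linear by blast
qed

lemma ldiff_coef:
  assumes "ldiff A" "bounded_linear L"
  shows "ldiff (\<lambda>z::real^3^'n::finite. L (A (z $ j)))"
    and "dirderiv v (\<lambda>z::real^3^'n. L (A (z $ j))) y = L (dirderiv (v $ j) A (y $ j))"
proof -
  have lT: "linear (\<lambda>z::real^3^'n. z $ j)" using bounded_linear_vec_nth bounded_linear.linear by blast
  have l1: "ldiff (\<lambda>z::real^3^'n. A (z $ j))" using ldiff_comp_lin[OF assms(1) lT] .
  show "ldiff (\<lambda>z::real^3^'n::finite. L (A (z $ j)))" using ldiff_blin(1)[OF l1 assms(2)] .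
  show "dirderiv v (\<lambda>z::real^3^'n. L (A (z $ j))) y = L (dirderiv (v $ j) A (y $ j))"
    using ldiff_blin(2)[OF l1 assms(2)] dirderiv_comp_lin[OF lT, of v A y] by simp
qed

lemma Phi_Ej_sum: "Phi M (Ej j k) = (\<Sum>l\<in>UNIV. M $ l $ k *\<^sub>R Ej j l)"
  by (simp add: vec_eq_iff Phi_def Ej_def matrix_vector_mult_def axis_def sum.delta'
      if_distrib[of "\<lambda>z. M $ _ $ _ * z"] cong: if_cong)

lemma Mcol_sum: "M *v axis k 1 = (\<Sum>l\<in>UNIV. M $ l $ k *\<^sub>R axis l (1::real))"
  by (simp add: vec_eq_iff matrix_vector_mult_def axis_def sum.delta' if_distrib[of "\<lambda>z. M $ _ $ _ * z"] cong: if_cong)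

lemma dd_expand:
  fixes g :: "real^3^'n::finite \<Rightarrow> complex"
  assumes "smooth g"
  shows "dirderiv (Phi M (Ej j k)) g y = (\<Sum>l\<in>UNIV. complex_of_real (M $ l $ k) * dirderiv (Ej j l) g y)"
  unfolding Phi_Ej_sum linear_sum[OF smooth_linear[OF assms, of y]] linear_scale[OF smooth_linear[OF assms, of y]]
  by (simp add: scaleR_conv_of_real)

lemma dA_expand:
  fixes A :: "real^3 \<Rightarrow> real^3"
  assumes "smooth A"
  shows "dirderiv (M *v axis k 1) A w = (\<Sum>l\<in>UNIV. M $ l $ k *\<^sub>R dirderiv (axis l 1) A w)"
  unfolding Mcol_sum linear_sum[OF smooth_linear[OF assms, of w]] linear_scale[OF smooth_linear[OF assms, of w]]
  by simp

lemma orth_gen: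
  fixes P :: "'i::finite \<Rightarrow> 'i \<Rightarrow> 'i \<Rightarrow> 'a::comm_ring_1"
  assumes o: "\<And>l n. (\<Sum>k\<in>UNIV. P l n k) = (if l = n then 1 else 0)"
  shows "(\<Sum>k\<in>UNIV. \<Sum>l\<in>UNIV. \<Sum>n\<in>UNIV. P l n k * X l n) = (\<Sum>l\<in>UNIV. X l l)"
proof -
  have "(\<Sum>k\<in>UNIV. \<Sum>l\<in>UNIV. \<Sum>n\<in>UNIV. P l n k * X l n)
      = (\<Sum>l\<in>UNIV. \<Sum>k\<in>UNIV. \<Sum>n\<in>UNIV. P l n k * X l n)"
    by (rule sum.swap)
  also have "\<dots> = (\<Sum>l\<in>UNIV. \<Sum>n\<in>UNIV. \<Sum>k\<in>UNIV. P l n k * X l n)"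
    by (rule sum.cong[OF refl], rule sum.swap)
  also have "\<dots> = (\<Sum>l\<in>UNIV. \<Sum>n\<in>UNIV. (\<Sum>k\<in>UNIV. P l n k) * X l n)"
    by (simp add: sum_distrib_right)
  also have "\<dots> = (\<Sum>l\<in>UNIV. X l l)" by (simp add: o if_distrib[of "\<lambda>z. z * _"] cong: if_cong)
  finally show ?thesis .
qed

lemma orthS2:
  fixes m :: "'i::finite \<Rightarrow> 'i \<Rightarrow> 'a::comm_ring_1"
  assumes o: "\<And>a b. (\<Sum>k\<in>UNIV. m k a * m b k) = (if a = b then 1 else 0)"
  shows "(\<Sum>k\<in>UNIV. (\<Sum>c\<in>UNIV. m k c * a c) * (\<Sum>l\<in>UNIV. m l k * d l)) = (\<Sum>c\<in>UNIV. a c * d c)"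
proof -
  have "(\<Sum>k\<in>UNIV. (\<Sum>c\<in>UNIV. m k c * a c) * (\<Sum>l\<in>UNIV. m l k * d l))
     = (\<Sum>k\<in>UNIV. \<Sum>l\<in>UNIV. \<Sum>c\<in>UNIV. (m k c * m l k) * (a c * d l))"
    by (simp add: sum_distrib_left sum_distrib_right mult_ac)
  also have "\<dots> = (\<Sum>c\<in>UNIV. a c * d c)"
  proof -
    have o': "\<And>l c. (\<Sum>k\<in>UNIV. m k c * m l k) = (if l = c then 1 else 0)" using o by auto
    show ?thesis using orth_gen[of "\<lambda>l c k. m k c * m l k" "\<lambda>l c. a c * d l", OF o'] by simp
  qed
  finally show ?thesis .
qed

lemma orthS3:
  fixes m :: "'i::finite \<Rightarrow> 'i \<Rightarrow> 'a::comm_ring_1"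
  assumes o: "\<And>a b. (\<Sum>k\<in>UNIV. m k a * m b k) = (if a = b then 1 else 0)"
  shows "(\<Sum>k\<in>UNIV. \<Sum>c\<in>UNIV. m k c * (\<Sum>l\<in>UNIV. m l k * X l c)) = (\<Sum>c\<in>UNIV. X c c)"
proof -
  have "(\<Sum>k\<in>UNIV. \<Sum>c\<in>UNIV. m k c * (\<Sum>l\<in>UNIV. m l k * X l c))
     = (\<Sum>k\<in>UNIV. \<Sum>c\<in>UNIV. \<Sum>l\<in>UNIV. (m k c * m l k) * X l c)"
    by (simp add: sum_distrib_left mult_ac)
  also have "\<dots> = (\<Sum>c\<in>UNIV. X c c)"
    using orth_gen[of "\<lambda>c l k. m k c * m l k" "\<lambda>c l. X l c"] o by simp
  finally show ?thesis .
qed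

lemma orthS1:
  fixes m :: "'i::finite \<Rightarrow> 'i \<Rightarrow> 'a::comm_ring_1"
  assumes o: "\<And>a b. (\<Sum>k\<in>UNIV. m a k * m b k) = (if a = b then 1 else 0)"
  shows "(\<Sum>k\<in>UNIV. \<Sum>l\<in>UNIV. m l k * (\<Sum>n\<in>UNIV. m n k * X l n)) = (\<Sum>l\<in>UNIV. X l l)"
proof -
  have "(\<Sum>k\<in>UNIV. \<Sum>l\<in>UNIV. m l k * (\<Sum>n\<in>UNIV. m n k * X l n))
     = (\<Sum>k\<in>UNIV. \<Sum>l\<in>UNIV. \<Sum>n\<in>UNIV. (m l k * m n k) * X l n)"
    by (simp add: sum_distrib_left mult_ac)
  also have "\<dots> = (\<Sum>l\<in>UNIV. X l l)" by (rule orth_gen) (rule o)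
  finally show ?thesis .
qed

lemma kin_alg2:
  fixes m :: "'i::finite \<Rightarrow> 'i \<Rightarrow> complex"
  assumes o2: "\<And>a b. (\<Sum>k\<in>UNIV. m a k * m b k) = (if a = b then 1 else 0)"
    and o3: "\<And>a b. (\<Sum>k\<in>UNIV. m k a * m b k) = (if a = b then 1 else 0)"
    and o4: "\<And>a b. (\<Sum>k\<in>UNIV. m k a * m k b) = (if a = b then 1 else 0)"
  shows "(\<Sum>k\<in>UNIV. - \<i> * (- \<i> * d2 k k - (Q * a k * d1 k + Q * da k k * f0)) - Q * a k * (- \<i> * d1 k - Q * a k * f0))
   = (\<Sum>k\<in>UNIV. \<i> * (\<i> * (\<Sum>l\<in>UNIV. m l k * (\<Sum>n\<in>UNIV. m n k * d2 l n))
        + (Q * (\<Sum>c\<in>UNIV. m k c * a c) * (\<Sum>l\<in>UNIV. m l k * d1 l)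
           + Q * (\<Sum>c\<in>UNIV. m k c * (\<Sum>l\<in>UNIV. m l k * da l c)) * f0))
      + Q * (\<Sum>c\<in>UNIV. m k c * a c) * (\<i> * (\<Sum>l\<in>UNIV. m l k * d1 l) + Q * (\<Sum>c\<in>UNIV. m k c * a c) * f0))"
    (is "?L = ?R")
proof -
  have L: "?L = - (\<Sum>k\<in>UNIV. d2 k k) + 2 * \<i> * Q * (\<Sum>k\<in>UNIV. a k * d1 k)
      + \<i> * Q * f0 * (\<Sum>k\<in>UNIV. da k k) + Q * Q * f0 * (\<Sum>k\<in>UNIV. a k * a k)"
  proof -
    have "?L = (\<Sum>k\<in>UNIV. - d2 k k + 2 * \<i> * Q * (a k * d1 k) + \<i> * Q * f0 * da k k + Q * Q * f0 * (a k * a k))"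
      by (rule sum.cong) (simp_all add: algebra_simps)
    also have "\<dots> = - (\<Sum>k\<in>UNIV. d2 k k) + 2 * \<i> * Q * (\<Sum>k\<in>UNIV. a k * d1 k)
      + \<i> * Q * f0 * (\<Sum>k\<in>UNIV. da k k) + Q * Q * f0 * (\<Sum>k\<in>UNIV. a k * a k)"
      by (simp add: sum.distrib sum_negf sum_distrib_left sum_subtractf)
    finally show ?thesis .
  qed
  have R: "?R = - (\<Sum>k\<in>UNIV. \<Sum>l\<in>UNIV. m l k * (\<Sum>n\<in>UNIV. m n k * d2 l n))
      + 2 * \<i> * Q * (\<Sum>k\<in>UNIV. (\<Sum>c\<in>UNIV. m k c * a c) * (\<Sum>l\<in>UNIV. m l k * d1 l))
      + \<i> * Q * f0 * (\<Sum>k\<in>UNIV. \<Sum>c\<in>UNIV. m k c * (\<Sum>l\<in>UNIV. m l k * da l c))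
      + Q * Q * f0 * (\<Sum>k\<in>UNIV. (\<Sum>c\<in>UNIV. m k c * a c) * (\<Sum>c\<in>UNIV. m k c * a c))"
  proof -
    have "?R = (\<Sum>k\<in>UNIV. - (\<Sum>l\<in>UNIV. m l k * (\<Sum>n\<in>UNIV. m n k * d2 l n))
      + 2 * \<i> * Q * ((\<Sum>c\<in>UNIV. m k c * a c) * (\<Sum>l\<in>UNIV. m l k * d1 l))
      + \<i> * Q * f0 * (\<Sum>c\<in>UNIV. m k c * (\<Sum>l\<in>UNIV. m l k * da l c))
      + Q * Q * f0 * ((\<Sum>c\<in>UNIV. m k c * a c) * (\<Sum>c\<in>UNIV. m k c * a c)))"
      by (rule sum.cong) (simp_all add: algebra_simps)
    also have "\<dots> = - (\<Sum>k\<in>UNIV. \<Sum>l\<in>UNIV. m l k * (\<Sum>n\<in>UNIV. m n k * d2 l n))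
      + 2 * \<i> * Q * (\<Sum>k\<in>UNIV. (\<Sum>c\<in>UNIV. m k c * a c) * (\<Sum>l\<in>UNIV. m l k * d1 l))
      + \<i> * Q * f0 * (\<Sum>k\<in>UNIV. \<Sum>c\<in>UNIV. m k c * (\<Sum>l\<in>UNIV. m l k * da l c))
      + Q * Q * f0 * (\<Sum>k\<in>UNIV. (\<Sum>c\<in>UNIV. m k c * a c) * (\<Sum>c\<in>UNIV. m k c * a c))"
      by (simp only: sum.distrib sum_negf sum_distrib_left[symmetric])
    finally show ?thesis .
  qed
  have S4: "(\<Sum>k\<in>UNIV. (\<Sum>c\<in>UNIV. m k c * a c) * (\<Sum>c\<in>UNIV. m k c * a c)) = (\<Sum>k\<in>UNIV. a k * a k)"
  proof -
    have "(\<Sum>k\<in>UNIV. (\<Sum>c\<in>UNIV. m k c * a c) * (\<Sum>c\<in>UNIV. m k c * a c))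
       = (\<Sum>k\<in>UNIV. \<Sum>c\<in>UNIV. \<Sum>e\<in>UNIV. (m k c * m k e) * (a c * a e))"
      by (simp add: sum_distrib_left sum_distrib_right mult_ac)
    also have "\<dots> = (\<Sum>k\<in>UNIV. a k * a k)"
      using orth_gen[of "\<lambda>c e k. m k c * m k e" "\<lambda>c e. a c * a e", OF o4] by simp
    finally show ?thesis .
  qed
  show ?thesis unfolding L R orthS1[OF o2] orthS2[OF o3] orthS3[OF o3] S4 ..
qed

lemma blin_coef1: "bounded_linear (\<lambda>w::real^3. complex_of_real (q * w $ k))"
proof -
  have "linear (\<lambda>w::real^3. complex_of_real (q * w $ k))"
    by (rule linearI; simp only: vector_scaleR_component vector_add_component)
      (simp_all add: algebra_simps scaleR_conv_of_real)
  thus ?thesis using linear_conv_bounded_linear by blast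
qed

lemma pdj_Ej: "pdj j k \<phi> x s = dirderiv (Ej j k) (\<lambda>y. \<phi> y s) x"
  by (simp add: pdj_def Ej_def)

lemma kin_point:
  fixes \<psi> :: "'n::finite wf" and A :: "real^3 \<Rightarrow> real^3" and M :: "real^3^3"
  assumes o2: "\<And>a b. (\<Sum>k\<in>UNIV. M$a$k * M$b$k) = (if a = b then 1 else 0)"
    and o3: "\<And>a b. (\<Sum>k\<in>UNIV. M$k$a * M$b$k) = (if a = b then 1 else 0)"
    and o4: "\<And>a b. (\<Sum>k\<in>UNIV. M$k$a * M$k$b) = (if a = b then 1 else 0)"
    and sA: "smooth A" and sf: "smooth (\<lambda>z. \<psi> z s)"
  shows "(\<Sum>k\<in>UNIV. kinmom A q j k (kinmom A q j k \<psi>) y s) =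
     (\<Sum>k\<in>UNIV. \<i> * dirderiv (Phi M (Ej j k)) (\<lambda>z. \<i> * dirderiv (Phi M (Ej j k)) (\<lambda>w. \<psi> w s) z
            + complex_of_real (q * (M *v A (z $ j)) $ k) * \<psi> z s) y
          + complex_of_real (q * (M *v A (y $ j)) $ k) * (\<i> * dirderiv (Phi M (Ej j k)) (\<lambda>w. \<psi> w s) y
            + complex_of_real (q * (M *v A (y $ j)) $ k) * \<psi> y s))"
proof -
  define f where "f = (\<lambda>w. \<psi> w s)"
  define mc where "mc = (\<lambda>a b. complex_of_real (M$a$b))"
  define d1 where "d1 = (\<lambda>l. dirderiv (Ej j l) f y)"
  define d2 where "d2 = (\<lambda>l n. dirderiv (Ej j l) (dirderiv (Ej j n) f) y)"
  define a where "a = (\<lambda>c. complex_of_real (A (y$j) $ c))"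
  define da where "da = (\<lambda>l c. complex_of_real (dirderiv (axis l 1) A (y$j) $ c))"
  have sf': "smooth f" using sf unfolding f_def .
  have ldf: "ldiff f" using smooth_ldiff[OF sf'] .
  have sDf: "smooth (dirderiv v f)" for v using smooth_dd[OF sf'] .
  have ldDf: "ldiff (dirderiv v f)" for v using smooth_ldiff[OF sDf] .
  have ldA: "ldiff A" using smooth_ldiff[OF sA] .
  note cA = ldiff_coef[OF ldA blin_coef1, where j=j]
  note cB = ldiff_coef[OF ldA blin_coef[where N=M], where j=j]
  have LK: "kinmom A q j k (kinmom A q j k \<psi>) y s = - \<i> * (- \<i> * d2 k k - (of_real q * a k * d1 k + of_real q * da k k * f y))
      - of_real q * a k * (- \<i> * d1 k - of_real q * a k * f y)" for k
  proof -
    have l1: "ldiff (\<lambda>x. - \<i> * dirderiv (Ej j k) f x)" by (rule ldiff_blin(1)[OF ldDf bounded_linear_mult_right])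
    have l2: "ldiff (\<lambda>x. complex_of_real (q * A (x $ j) $ k) * f x)" by (rule ldiff_mult(1)[OF cA(1) ldf])
    have "kinmom A q j k (kinmom A q j k \<psi>) y s =
       - \<i> * dirderiv (Ej j k) (\<lambda>x. - \<i> * dirderiv (Ej j k) f x - complex_of_real (q * A (x $ j) $ k) * f x) y
       - complex_of_real (q * A (y $ j) $ k) * (- \<i> * dirderiv (Ej j k) f y - complex_of_real (q * A (y $ j) $ k) * f y)"
      by (simp add: kinmom_def pdj_Ej f_def)
    also have "\<dots> = - \<i> * (- \<i> * dirderiv (Ej j k) (dirderiv (Ej j k) f) y
        - (complex_of_real (q * A (y $ j) $ k) * dirderiv (Ej j k) f y
           + complex_of_real (q * dirderiv (axis k 1) A (y $ j) $ k) * f y))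
       - complex_of_real (q * A (y $ j) $ k) * (- \<i> * dirderiv (Ej j k) f y - complex_of_real (q * A (y $ j) $ k) * f y)"
      by (simp only: ldiff_diff(2)[OF l1 l2] ldiff_blin(2)[OF ldDf bounded_linear_mult_right]
          ldiff_mult(2)[OF cA(1) ldf] cA(2) Ej_nth)
    finally show ?thesis by (simp add: d1_def d2_def a_def da_def)
  qed
  have Dfexp: "dirderiv (Phi M (Ej j k)) f = (\<lambda>z. \<Sum>n\<in>UNIV. mc n k * dirderiv (Ej j n) f z)" for k
    by (rule ext) (simp add: dd_expand[OF sf'] mc_def)
  have RK: "\<i> * dirderiv (Phi M (Ej j k)) (\<lambda>z. \<i> * dirderiv (Phi M (Ej j k)) f z
            + complex_of_real (q * (M *v A (z $ j)) $ k) * f z) y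
          + complex_of_real (q * (M *v A (y $ j)) $ k) * (\<i> * dirderiv (Phi M (Ej j k)) f y
            + complex_of_real (q * (M *v A (y $ j)) $ k) * f y)
     = \<i> * (\<i> * (\<Sum>l\<in>UNIV. mc l k * (\<Sum>n\<in>UNIV. mc n k * d2 l n))
        + (of_real q * (\<Sum>c\<in>UNIV. mc k c * a c) * (\<Sum>l\<in>UNIV. mc l k * d1 l)
           + of_real q * (\<Sum>c\<in>UNIV. mc k c * (\<Sum>l\<in>UNIV. mc l k * da l c)) * f y))
      + of_real q * (\<Sum>c\<in>UNIV. mc k c * a c) * (\<i> * (\<Sum>l\<in>UNIV. mc l k * d1 l) + of_real q * (\<Sum>c\<in>UNIV. mc k c * a c) * f y)"
    for k
  proof -
    have l1: "ldiff (\<lambda>x. \<i> * dirderiv (Phi M (Ej j k)) f x)" by (rule ldiff_blin(1)[OF ldDf bounded_linear_mult_right])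
    have l2: "ldiff (\<lambda>x. complex_of_real (q * (M *v A (x $ j)) $ k) * f x)" by (rule ldiff_mult(1)[OF cB(1) ldf])
    have e1: "dirderiv (Phi M (Ej j k)) (\<lambda>z. \<i> * dirderiv (Phi M (Ej j k)) f z
            + complex_of_real (q * (M *v A (z $ j)) $ k) * f z) y
       = \<i> * dirderiv (Phi M (Ej j k)) (dirderiv (Phi M (Ej j k)) f) y
         + (complex_of_real (q * (M *v A (y $ j)) $ k) * dirderiv (Phi M (Ej j k)) f y
            + complex_of_real (q * (M *v dirderiv (M *v axis k 1) A (y $ j)) $ k) * f y)"
      by (simp only: ldiff_add(2)[OF l1 l2] ldiff_blin(2)[OF ldDf bounded_linear_mult_right]
          ldiff_mult(2)[OF cB(1) ldf] cB(2) Phi_nth Ej_nth)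
    have e2: "dirderiv (Phi M (Ej j k)) (dirderiv (Phi M (Ej j k)) f) y = (\<Sum>l\<in>UNIV. mc l k * (\<Sum>n\<in>UNIV. mc n k * d2 l n))"
    proof -
      have ln: "ldiff (\<lambda>z. mc n k * dirderiv (Ej j n) f z)" for n
        by (rule ldiff_blin(1)[OF ldDf bounded_linear_mult_right])
      have "dirderiv (Ej j l) (dirderiv (Phi M (Ej j k)) f) y = (\<Sum>n\<in>UNIV. mc n k * d2 l n)" for l
        unfolding Dfexp ldiff_sum(2)[OF ln]
        by (simp add: ldiff_blin(2)[OF ldDf bounded_linear_mult_right] d2_def)
      thus ?thesis by (simp add: dd_expand[OF sDf] mc_def)
    qed
    have e3: "dirderiv (Phi M (Ej j k)) f y = (\<Sum>l\<in>UNIV. mc l k * d1 l)"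
      by (simp add: dd_expand[OF sf'] mc_def d1_def)
    have e4: "complex_of_real (q * (M *v A (y $ j)) $ k) = of_real q * (\<Sum>c\<in>UNIV. mc k c * a c)"
      by (simp add: matrix_vector_mult_def mc_def a_def)
    have e5: "complex_of_real (q * (M *v dirderiv (M *v axis k 1) A (y $ j)) $ k)
        = of_real q * (\<Sum>c\<in>UNIV. mc k c * (\<Sum>l\<in>UNIV. mc l k * da l c))"
      unfolding dA_expand[OF sA] by (simp add: matrix_vector_mult_def mc_def da_def sum_component)
    show ?thesis unfolding e1 e2 e3 e4 e5 ..
  qed
  have o2': "\<And>a b. (\<Sum>k\<in>UNIV. mc a k * mc b k) = (if a = b then 1 else 0)"
    unfolding mc_def of_real_mult[symmetric] of_real_sum[symmetric] o2 by simp
  have o3': "\<And>a b. (\<Sum>k\<in>UNIV. mc k a * mc b k) = (if a = b then 1 else 0)"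
    unfolding mc_def of_real_mult[symmetric] of_real_sum[symmetric] o3 by simp
  have o4': "\<And>a b. (\<Sum>k\<in>UNIV. mc k a * mc k b) = (if a = b then 1 else 0)"
    unfolding mc_def of_real_mult[symmetric] of_real_sum[symmetric] o4 by simp
  have fz: "\<And>z. \<psi> z s = f z" by (simp add: f_def)
  show ?thesis
    unfolding fz LK RK
    by (rule kin_alg2[OF o2' o3' o4'])
qed

lemma sum_upd_reindex:
  fixes F :: "('n::finite \<Rightarrow> bool) \<Rightarrow> bool \<Rightarrow> 'a::comm_monoid_add"
  shows "(\<Sum>s'\<in>UNIV. \<Sum>b\<in>UNIV. F s' b) = (\<Sum>t\<in>UNIV. \<Sum>a\<in>UNIV. F (t(j := a)) (t j))"
proof -
  have "(\<Sum>s'\<in>UNIV. \<Sum>b\<in>UNIV. F s' b) = (\<Sum>p\<in>UNIV \<times> UNIV. F (fst p) (snd p))"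
    by (simp add: sum.cartesian_product split_beta)
  also have "\<dots> = (\<Sum>p\<in>UNIV \<times> UNIV. F ((fst p)(j := snd p)) (fst p j))"
    by (rule sum.reindex_bij_witness[where i="\<lambda>p. ((fst p)(j := snd p), fst p j)" and j="\<lambda>p. ((fst p)(j := snd p), fst p j)"])
       auto
  also have "\<dots> = (\<Sum>t\<in>UNIV. \<Sum>a\<in>UNIV. F (t(j := a)) (t j))"
    by (simp add: sum.cartesian_product split_beta)
  finally show ?thesis .
qed

lemma prod_upd_right:
  fixes Us :: "bool \<Rightarrow> bool \<Rightarrow> complex" and s t :: "'n::finite \<Rightarrow> bool"
  shows "(\<Prod>i\<in>UNIV. Us (s i) ((t(j := a)) i)) = Us (s j) a * (\<Prod>i\<in>UNIV - {j}. Us (s i) (t i))"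
proof -
  have "(\<Prod>i\<in>UNIV. Us (s i) ((t(j := a)) i)) = Us (s j) a * (\<Prod>i\<in>UNIV - {j}. Us (s i) ((t(j := a)) i))"
    by (subst prod.remove[of UNIV j]) auto
  also have "(\<Prod>i\<in>UNIV - {j}. Us (s i) ((t(j := a)) i)) = (\<Prod>i\<in>UNIV - {j}. Us (s i) (t i))"
    by (rule prod.cong) auto
  finally show ?thesis .
qed

lemma prod_upd_left:
  fixes Us :: "bool \<Rightarrow> bool \<Rightarrow> complex" and s t :: "'n::finite \<Rightarrow> bool"
  shows "(\<Prod>i\<in>UNIV. Us ((s(j := b)) i) (t i)) = Us b (t j) * (\<Prod>i\<in>UNIV - {j}. Us (s i) (t i))"
proof -
  have "(\<Prod>i\<in>UNIV. Us ((s(j := b)) i) (t i)) = Us b (t j) * (\<Prod>i\<in>UNIV - {j}. Us ((s(j := b)) i) (t i))"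
    by (subst prod.remove[of UNIV j]) auto
  also have "(\<Prod>i\<in>UNIV - {j}. Us ((s(j := b)) i) (t i)) = (\<Prod>i\<in>UNIV - {j}. Us (s i) (t i))"
    by (rule prod.cong) auto
  finally show ?thesis .
qed

lemma spin_alg:
  fixes Us :: "bool \<Rightarrow> bool \<Rightarrow> complex" and c :: "('n::finite \<Rightarrow> bool) \<Rightarrow> complex"
    and \<alpha> \<beta> :: "3 \<Rightarrow> real"
  assumes cond: "\<And>a0 c0. (\<Sum>a\<in>UNIV. Us a0 a * (\<Sum>k\<in>UNIV. of_real (\<beta> k) * cnj (pauli k a c0)))
                        = (\<Sum>b\<in>UNIV. (\<Sum>k\<in>UNIV. of_real (\<alpha> k) * pauli k a0 b) * Us b c0)"
  shows "(\<Sum>s'\<in>UNIV. (\<Prod>i\<in>UNIV. Us (s i) (s' i)) *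
            (\<Sum>k\<in>UNIV. \<Sum>b\<in>UNIV. of_real (\<beta> k) * cnj (pauli k (s' j) b) * c (s'(j := b))))
       = (\<Sum>k\<in>UNIV. \<Sum>b\<in>UNIV. of_real (\<alpha> k) * pauli k (s j) b *
            (\<Sum>s'\<in>UNIV. (\<Prod>i\<in>UNIV. Us ((s(j := b)) i) (s' i)) * c s'))"
proof -
  define R where "R = (\<lambda>t. \<Prod>i\<in>UNIV - {j}. Us (s i) (t i))"
  define \<Gamma> where "\<Gamma> = (\<lambda>a b. \<Sum>k\<in>UNIV. of_real (\<beta> k) * cnj (pauli k a b))"
  define \<Delta> where "\<Delta> = (\<lambda>a b. \<Sum>k\<in>UNIV. of_real (\<alpha> k) * pauli k a b)"
  have "(\<Sum>s'\<in>UNIV. (\<Prod>i\<in>UNIV. Us (s i) (s' i)) *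
            (\<Sum>k\<in>UNIV. \<Sum>b\<in>UNIV. of_real (\<beta> k) * cnj (pauli k (s' j) b) * c (s'(j := b))))
      = (\<Sum>s'\<in>UNIV. \<Sum>b\<in>UNIV. (\<Prod>i\<in>UNIV. Us (s i) (s' i)) * \<Gamma> (s' j) b * c (s'(j := b)))"
  proof (rule sum.cong[OF refl])
    fix s'
    have "(\<Sum>k\<in>UNIV. \<Sum>b\<in>UNIV. of_real (\<beta> k) * cnj (pauli k (s' j) b) * c (s'(j := b)))
        = (\<Sum>b\<in>UNIV. \<Sum>k\<in>UNIV. of_real (\<beta> k) * cnj (pauli k (s' j) b) * c (s'(j := b)))"
      by (rule sum.swap)
    thus "(\<Prod>i\<in>UNIV. Us (s i) (s' i)) *
            (\<Sum>k\<in>UNIV. \<Sum>b\<in>UNIV. of_real (\<beta> k) * cnj (pauli k (s' j) b) * c (s'(j := b)))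
        = (\<Sum>b\<in>UNIV. (\<Prod>i\<in>UNIV. Us (s i) (s' i)) * \<Gamma> (s' j) b * c (s'(j := b)))"
      by (simp add: \<Gamma>_def sum_distrib_left sum_distrib_right mult_ac)
  qed
  also have "\<dots> = (\<Sum>t\<in>UNIV. \<Sum>a\<in>UNIV. (\<Prod>i\<in>UNIV. Us (s i) ((t(j := a)) i)) * \<Gamma> a (t j) * c t)"
    by (subst sum_upd_reindex[of _ j]) simp
  also have "\<dots> = (\<Sum>t\<in>UNIV. \<Sum>a\<in>UNIV. (Us (s j) a * R t) * \<Gamma> a (t j) * c t)"
    by (simp only: prod_upd_right R_def)
  also have "\<dots> = (\<Sum>t\<in>UNIV. R t * c t * (\<Sum>a\<in>UNIV. Us (s j) a * \<Gamma> a (t j)))"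
    by (simp add: sum_distrib_left mult_ac)
  also have "\<dots> = (\<Sum>t\<in>UNIV. R t * c t * (\<Sum>b\<in>UNIV. \<Delta> (s j) b * Us b (t j)))"
    using cond unfolding \<Gamma>_def \<Delta>_def by simp
  also have "\<dots> = (\<Sum>b\<in>UNIV. \<Sum>t\<in>UNIV. \<Delta> (s j) b * ((\<Prod>i\<in>UNIV. Us ((s(j := b)) i) (t i)) * c t))"
  proof -
    have "(\<Sum>t\<in>UNIV. R t * c t * (\<Sum>b\<in>UNIV. \<Delta> (s j) b * Us b (t j)))
       = (\<Sum>t\<in>UNIV. \<Sum>b\<in>UNIV. \<Delta> (s j) b * ((Us b (t j) * R t) * c t))"
      by (simp add: sum_distrib_left mult_ac)
    also have "\<dots> = (\<Sum>t\<in>UNIV. \<Sum>b\<in>UNIV. \<Delta> (s j) b * ((\<Prod>i\<in>UNIV. Us ((s(j := b)) i) (t i)) * c t))"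
      by (simp only: prod_upd_left R_def)
    also have "\<dots> = (\<Sum>b\<in>UNIV. \<Sum>t\<in>UNIV. \<Delta> (s j) b * ((\<Prod>i\<in>UNIV. Us ((s(j := b)) i) (t i)) * c t))"
      by (rule sum.swap)
    finally show ?thesis .
  qed
  also have "\<dots> = (\<Sum>k\<in>UNIV. \<Sum>b\<in>UNIV. of_real (\<alpha> k) * pauli k (s j) b *
            (\<Sum>s'\<in>UNIV. (\<Prod>i\<in>UNIV. Us ((s(j := b)) i) (s' i)) * c s'))"
  proof -
    have "(\<Sum>b\<in>UNIV. \<Sum>t\<in>UNIV. \<Delta> (s j) b * ((\<Prod>i\<in>UNIV. Us ((s(j := b)) i) (t i)) * c t))
        = (\<Sum>b\<in>UNIV. \<Sum>k\<in>UNIV. of_real (\<alpha> k) * pauli k (s j) b *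
            (\<Sum>s'\<in>UNIV. (\<Prod>i\<in>UNIV. Us ((s(j := b)) i) (s' i)) * c s'))"
    proof (rule sum.cong[OF refl])
      fix b
      define X where "X = (\<lambda>t. (\<Prod>i\<in>UNIV. Us ((s(j := b)) i) (t i)) * c t)"
      have "(\<Sum>t\<in>UNIV. \<Delta> (s j) b * X t) = (\<Sum>t\<in>UNIV. \<Sum>k\<in>UNIV. of_real (\<alpha> k) * pauli k (s j) b * X t)"
        by (simp add: \<Delta>_def sum_distrib_right)
      also have "\<dots> = (\<Sum>k\<in>UNIV. \<Sum>t\<in>UNIV. of_real (\<alpha> k) * pauli k (s j) b * X t)"
        by (rule sum.swap)
      also have "\<dots> = (\<Sum>k\<in>UNIV. of_real (\<alpha> k) * pauli k (s j) b * (\<Sum>t\<in>UNIV. X t))"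
        by (simp add: sum_distrib_left)
      finally show "(\<Sum>t\<in>UNIV. \<Delta> (s j) b * ((\<Prod>i\<in>UNIV. Us ((s(j := b)) i) (t i)) * c t))
        = (\<Sum>k\<in>UNIV. of_real (\<alpha> k) * pauli k (s j) b *
            (\<Sum>s'\<in>UNIV. (\<Prod>i\<in>UNIV. Us ((s(j := b)) i) (s' i)) * c s'))"
        unfolding X_def .
    qed
    also have "\<dots> = (\<Sum>k\<in>UNIV. \<Sum>b\<in>UNIV. of_real (\<alpha> k) * pauli k (s j) b *
            (\<Sum>s'\<in>UNIV. (\<Prod>i\<in>UNIV. Us ((s(j := b)) i) (s' i)) * c s'))"
      by (rule sum.swap)
    finally show ?thesis .
  qed
  finally show ?thesis .
qed

definition UsJ :: "bool \<Rightarrow> bool \<Rightarrow> complex" where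
  "UsJ a b = (if a = b then 0 else if a then 1 else -1)"

definition UsN :: "real \<Rightarrow> real \<Rightarrow> real \<Rightarrow> bool \<Rightarrow> bool \<Rightarrow> complex" where
  "UsN n1 n2 n3 a b = (if a then (if b then - of_real n1 + \<i> * of_real n2 else of_real n3)
                       else (if b then of_real n3 else of_real n1 + \<i> * of_real n2))"

lemma UNIV_bool_sum: "(\<Sum>b\<in>(UNIV::bool set). f b) = f True + f False"
  by (simp add: UNIV_bool add.commute)

lemma unitary_UsJ: "unitary2 UsJ"
  unfolding unitary2_def UsJ_def by (simp add: UNIV_bool_sum)

lemma unitary_UsN:
  assumes "n1 * n1 + n2 * n2 + n3 * n3 = 1"
  shows "unitary2 (UsN n1 n2 n3)"
  unfolding unitary2_def UsN_def
proof (intro allI)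
  fix a b :: bool
  show "(\<Sum>c\<in>UNIV. cnj (if c then if a then - complex_of_real n1 + \<i> * complex_of_real n2 else complex_of_real n3
                else if a then complex_of_real n3 else complex_of_real n1 + \<i> * complex_of_real n2) *
           (if c then if b then - complex_of_real n1 + \<i> * complex_of_real n2 else complex_of_real n3
            else if b then complex_of_real n3 else complex_of_real n1 + \<i> * complex_of_real n2)) =
          (if a = b then 1 else 0)"
    using assms by (cases a; cases b) (simp_all add: UNIV_bool_sum complex_eq_iff algebra_simps)
qed

lemma cond_UsJ:
  "(\<Sum>k\<in>UNIV. of_real (if k = l then 1 else 0) * (\<Sum>b\<in>UNIV. UsJ a b * cnj (pauli k b c)))
     = - (\<Sum>b\<in>UNIV. pauli l a b * UsJ b c)"
proof -
  have "\<forall>l. (\<Sum>k\<in>UNIV. of_real (if k = l then 1 else 0) * (\<Sum>b\<in>UNIV. UsJ a b * cnj (pauli k b c)))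
     = - (\<Sum>b\<in>UNIV. pauli l a b * UsJ b c)"
    unfolding forall_3 by (cases a; cases c) (simp_all add: UNIV_bool_sum sum_3 UsJ_def pauli_def)
  thus ?thesis by blast
qed

lemma cond_UsN:
  assumes "n 1 * n 1 + n 2 * n 2 + n 3 * n 3 = 1"
  shows "(\<Sum>k\<in>UNIV. of_real (2 * n k * n l - (if k = l then 1 else 0)) * (\<Sum>b\<in>UNIV. UsN (n 1) (n 2) (n 3) a b * cnj (pauli k b c)))
     = - (\<Sum>b\<in>UNIV. pauli l a b * UsN (n 1) (n 2) (n 3) b c)"
proof -
  have "\<forall>l. (\<Sum>k\<in>UNIV. of_real (2 * n k * n l - (if k = l then 1 else 0)) * (\<Sum>b\<in>UNIV. UsN (n 1) (n 2) (n 3) a b * cnj (pauli k b c)))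
     = - (\<Sum>b\<in>UNIV. pauli l a b * UsN (n 1) (n 2) (n 3) b c)"
    unfolding forall_3 using assms
    apply (cases a; cases c)
    apply (simp_all add: UNIV_bool_sum sum_3 UsN_def pauli_def complex_eq_iff algebra_simps)
    apply (intro conjI; algebra)+
    done
  thus ?thesis by blast
qed

lemma classify_aux:
  fixes P :: "3 \<Rightarrow> 3 \<Rightarrow> real"
  assumes pos: "P m m > 0" and minor: "\<And>k l. P k l * P m m = P k m * P l m"
    and diag: "P m m = P 1 m * P 1 m + P 2 m * P 2 m + P 3 m * P 3 m"
  shows "\<exists>n. n 1 * n 1 + n 2 * n 2 + n 3 * n 3 = 1 \<and> (\<forall>k l. P k l = n k * n l)"
proof -
  define n where "n = (\<lambda>k. P k m / sqrt (P m m))"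
  have sq: "sqrt (P m m) * sqrt (P m m) = P m m" using pos by simp
  have nn: "n k * n l = P k l" for k l
  proof -
    have "n k * n l = P k m * P l m / (sqrt (P m m) * sqrt (P m m))" by (simp add: n_def)
    also have "\<dots> = P k l" using minor[of k l] pos by (simp add: sq field_simps)
    finally show ?thesis .
  qed
  have "n 1 * n 1 + n 2 * n 2 + n 3 * n 3 = (P 1 m * P 1 m + P 2 m * P 2 m + P 3 m * P 3 m) / P m m"
    using pos by (simp add: n_def sq add_divide_distrib)
  also have "\<dots> = 1" using diag pos by simp
  finally have "n 1 * n 1 + n 2 * n 2 + n 3 * n 3 = 1" .
  thus ?thesis using nn by (intro exI[of _ n]) auto
qed

lemma classify:
  fixes r :: "3 \<Rightarrow> 3 \<Rightarrow> real"
  assumes sym: "\<And>a b. r a b = r b a"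
    and sq: "\<And>a b. (\<Sum>k\<in>UNIV. r a k * r k b) = (if a = b then 1 else 0)"
    and det: "r 1 1 * r 2 2 * r 3 3 + r 1 2 * r 2 3 * r 3 1 + r 1 3 * r 2 1 * r 3 2
              - r 1 1 * r 2 3 * r 3 2 - r 1 2 * r 2 1 * r 3 3 - r 1 3 * r 2 2 * r 3 1 = 1"
  shows "(\<forall>a b. r a b = (if a = b then 1 else 0)) \<or>
         (\<exists>n. n 1 * n 1 + n 2 * n 2 + n 3 * n 3 = 1 \<and> (\<forall>k l. r k l = 2 * n k * n l - (if k = l then 1 else 0)))"
proof -
  have r21: "r 2 1 = r 1 2" and r31: "r 3 1 = r 1 3" and r32: "r 3 2 = r 2 3" using sym by auto
  note sq3 = sq[unfolded sum_3]
  have s1: "r 1 1 * r 1 1 + r 1 2 * r 1 2 + r 1 3 * r 1 3 = 1" using sq3[of 1 1] by (simp add: r21 r31 r32)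
  have s2: "r 1 2 * r 1 2 + r 2 2 * r 2 2 + r 2 3 * r 2 3 = 1" using sq3[of 2 2] by (simp add: r21 r31 r32)
  have s3: "r 1 3 * r 1 3 + r 2 3 * r 2 3 + r 3 3 * r 3 3 = 1" using sq3[of 3 3] by (simp add: r21 r31 r32)
  have s4: "r 1 1 * r 1 2 + r 1 2 * r 2 2 + r 1 3 * r 2 3 = 0" using sq3[of 1 2] by (simp add: r21 r31 r32)
  have s5: "r 1 1 * r 1 3 + r 1 2 * r 2 3 + r 1 3 * r 3 3 = 0" using sq3[of 1 3] by (simp add: r21 r31 r32)
  have s6: "r 1 2 * r 1 3 + r 2 2 * r 2 3 + r 2 3 * r 3 3 = 0" using sq3[of 2 3] by (simp add: r21 r31 r32)
  have d: "r 1 1 * r 2 2 * r 3 3 + r 1 2 * r 2 3 * r 1 3 + r 1 3 * r 1 2 * r 2 3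
              - r 1 1 * r 2 3 * r 2 3 - r 1 2 * r 1 2 * r 3 3 - r 1 3 * r 2 2 * r 1 3 = 1"
    using det by (simp add: r21 r31 r32)
  have c1: "r 2 2 * r 3 3 - r 2 3 * r 2 3 = r 1 1" using s1 s2 s3 s4 s5 s6 d by algebra
  have c2: "r 1 1 * r 3 3 - r 1 3 * r 1 3 = r 2 2" using s1 s2 s3 s4 s5 s6 d by algebra
  have c3: "r 1 1 * r 2 2 - r 1 2 * r 1 2 = r 3 3" using s1 s2 s3 s4 s5 s6 d by algebra
  have c4: "r 1 3 * r 2 3 - r 1 2 * r 3 3 = r 1 2" using s1 s2 s3 s4 s5 s6 d by algebra
  have c5: "r 1 2 * r 2 3 - r 2 2 * r 1 3 = r 1 3" using s1 s2 s3 s4 s5 s6 d by algebra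
  have c6: "r 1 2 * r 1 3 - r 1 1 * r 2 3 = r 2 3" using s1 s2 s3 s4 s5 s6 d by algebra
  define t where "t = r 1 1 + r 2 2 + r 3 3"
  have ch1: "(1 + t) * (r 1 1 - 1) = 0" unfolding t_def using s1 s2 s3 s4 s5 s6 c1 c2 c3 c4 c5 c6 by algebra
  have ch2: "(1 + t) * (r 2 2 - 1) = 0" unfolding t_def using s1 s2 s3 s4 s5 s6 c1 c2 c3 c4 c5 c6 by algebra
  have ch3: "(1 + t) * (r 3 3 - 1) = 0" unfolding t_def using s1 s2 s3 s4 s5 s6 c1 c2 c3 c4 c5 c6 by algebra
  have ch4: "(1 + t) * r 1 2 = 0" unfolding t_def using s1 s2 s3 s4 s5 s6 c1 c2 c3 c4 c5 c6 by algebra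
  have ch5: "(1 + t) * r 1 3 = 0" unfolding t_def using s1 s2 s3 s4 s5 s6 c1 c2 c3 c4 c5 c6 by algebra
  have ch6: "(1 + t) * r 2 3 = 0" unfolding t_def using s1 s2 s3 s4 s5 s6 c1 c2 c3 c4 c5 c6 by algebra
  show ?thesis
  proof (cases "t = -1")
    case False
    hence "1 + t \<noteq> 0" by simp
    hence "r 1 1 = 1" "r 2 2 = 1" "r 3 3 = 1" "r 1 2 = 0" "r 1 3 = 0" "r 2 3 = 0"
      using ch1 ch2 ch3 ch4 ch5 ch6 by simp_all
    hence "\<forall>a b. r a b = (if a = b then 1 else 0)"
      unfolding forall_3 by (simp add: r21 r31 r32)
    thus ?thesis by blast
  next
    case True
    define P where "P = (\<lambda>k l. (r k l + (if k = l then 1 else 0)) / 2)"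
    have tr: "r 1 1 + r 2 2 + r 3 3 = -1" using True t_def by simp
    have minor: "\<forall>m k l. P k l * P m m = P k m * P l m"
      unfolding forall_3 P_def using tr s1 s2 s3 s4 s5 s6 c1 c2 c3 c4 c5 c6
      by (simp add: r21 r31 r32 field_simps)
    have diag: "\<forall>m. P m m = P 1 m * P 1 m + P 2 m * P 2 m + P 3 m * P 3 m"
      unfolding forall_3 P_def using tr s1 s2 s3 s4 s5 s6 c1 c2 c3 c4 c5 c6
      by (simp add: r21 r31 r32 field_simps)
    have nonneg: "P m m \<ge> 0" for m
      using diag[rule_format, of m] by (metis add_nonneg_nonneg zero_le_square)
    have trP: "P 1 1 + P 2 2 + P 3 3 = 1" using tr unfolding P_def by (simp add: field_simps)
    obtain m where m: "P m m > 0"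
    proof -
      consider "P 1 1 > 0" | "P 2 2 > 0" | "P 3 3 > 0"
        using nonneg[of 1] nonneg[of 2] nonneg[of 3] trP by linarith
      thus ?thesis using that by metis
    qed
    obtain n where n1: "n 1 * n 1 + n 2 * n 2 + n 3 * n 3 = 1" and n2: "\<forall>k l. P k l = n k * n l"
      using classify_aux[of P m, OF m] minor diag by blast
    have "\<forall>k l. r k l = 2 * n k * n l - (if k = l then 1 else 0)"
      using n2 unfolding P_def by (auto simp: field_simps)
    thus ?thesis using n1 by blast
  qed
qed

lemma Mfacts:
  fixes M :: "real^3^3"
  assumes orth: "orthogonal_matrix M" and MM: "M ** M = mat 1"
  shows symM: "\<And>a b. M$a$b = M$b$a"
    and o1: "\<And>a b. (\<Sum>k\<in>UNIV. M$a$k * M$k$b) = (if a = b then 1 else 0)"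
    and o2: "\<And>a b. (\<Sum>k\<in>UNIV. M$a$k * M$b$k) = (if a = b then 1 else 0)"
    and o3: "\<And>a b. (\<Sum>k\<in>UNIV. M$k$a * M$b$k) = (if a = b then 1 else 0)"
    and o4: "\<And>a b. (\<Sum>k\<in>UNIV. M$k$a * M$k$b) = (if a = b then 1 else 0)"
    and dd: "det M * det M = 1"
proof -
  have tMM: "transpose M ** M = mat 1" using orth unfolding orthogonal_matrix_def by blast
  have "transpose M = transpose M ** (M ** M)" by (simp add: MM)
  also have "\<dots> = M" by (simp add: matrix_mul_assoc tMM)
  finally have tM: "transpose M = M" .
  show sM: "M$a$b = M$b$a" for a b
    using arg_cong[OF tM, of "\<lambda>X. X$b$a"] by (simp add: transpose_def)
  show O1: "(\<Sum>k\<in>UNIV. M$a$k * M$k$b) = (if a = b then 1 else 0)" for a b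
    using arg_cong[OF MM, of "\<lambda>X. X$a$b"] by (simp add: matrix_matrix_mult_def mat_def)
  show "(\<Sum>k\<in>UNIV. M$a$k * M$b$k) = (if a = b then 1 else 0)" for a b
  proof -
    have "(\<Sum>k\<in>UNIV. M$a$k * M$b$k) = (\<Sum>k\<in>UNIV. M$a$k * M$k$b)"
      by (rule sum.cong[OF refl]) (simp add: sM[of b])
    thus ?thesis using O1 by simp
  qed
  show "(\<Sum>k\<in>UNIV. M$k$a * M$b$k) = (if a = b then 1 else 0)" for a b
  proof -
    have "(\<Sum>k\<in>UNIV. M$k$a * M$b$k) = (\<Sum>k\<in>UNIV. M$b$k * M$k$a)"
      by (rule sum.cong[OF refl]) simp
    thus ?thesis using O1[of b a] by auto
  qed
  show "(\<Sum>k\<in>UNIV. M$k$a * M$k$b) = (if a = b then 1 else 0)" for a b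
  proof -
    have "(\<Sum>k\<in>UNIV. M$k$a * M$k$b) = (\<Sum>k\<in>UNIV. M$a$k * M$k$b)"
      by (rule sum.cong[OF refl]) (simp add: sM[of _ a])
    thus ?thesis using O1 by simp
  qed
  show "det M * det M = 1" using arg_cong[OF MM, of det] by (simp add: det_mul)
qed

lemma cofactors:
  fixes M :: "real^3^3"
  assumes symM: "\<And>a b. M$a$b = M$b$a"
    and o1: "\<And>a b. (\<Sum>k\<in>UNIV. M$a$k * M$k$b) = (if a = b then 1 else 0)"
  defines "d \<equiv> det M"
  shows "M$2$2 * M$3$3 - M$2$3 * M$2$3 = d * M$1$1"
    "-(M$1$2 * M$3$3 - M$2$3 * M$1$3) = d * M$1$2"
    "M$1$2 * M$2$3 - M$2$2 * M$1$3 = d * M$1$3"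
    "M$1$1 * M$3$3 - M$1$3 * M$1$3 = d * M$2$2"
    "-(M$1$1 * M$2$3 - M$1$3 * M$1$2) = d * M$2$3"
    "M$1$1 * M$2$2 - M$1$2 * M$1$2 = d * M$3$3"
proof -
  have r21: "M$2$1 = M$1$2" and r31: "M$3$1 = M$1$3" and r32: "M$3$2 = M$2$3" using symM by auto
  note sq3 = o1[unfolded sum_3]
  have s1: "M$1$1 * M$1$1 + M$1$2 * M$1$2 + M$1$3 * M$1$3 = 1" using sq3[of 1 1] by (simp add: r21 r31 r32)
  have s2: "M$1$2 * M$1$2 + M$2$2 * M$2$2 + M$2$3 * M$2$3 = 1" using sq3[of 2 2] by (simp add: r21 r31 r32)
  have s3: "M$1$3 * M$1$3 + M$2$3 * M$2$3 + M$3$3 * M$3$3 = 1" using sq3[of 3 3] by (simp add: r21 r31 r32)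
  have s4: "M$1$1 * M$1$2 + M$1$2 * M$2$2 + M$1$3 * M$2$3 = 0" using sq3[of 1 2] by (simp add: r21 r31 r32)
  have s5: "M$1$1 * M$1$3 + M$1$2 * M$2$3 + M$1$3 * M$3$3 = 0" using sq3[of 1 3] by (simp add: r21 r31 r32)
  have s6: "M$1$2 * M$1$3 + M$2$2 * M$2$3 + M$2$3 * M$3$3 = 0" using sq3[of 2 3] by (simp add: r21 r31 r32)
  have dd: "d = M$1$1 * M$2$2 * M$3$3 + M$1$2 * M$2$3 * M$1$3 + M$1$3 * M$1$2 * M$2$3
              - M$1$1 * M$2$3 * M$2$3 - M$1$2 * M$1$2 * M$3$3 - M$1$3 * M$2$2 * M$1$3"
    unfolding d_def det_3 by (simp add: r21 r31 r32)
  show "M$2$2 * M$3$3 - M$2$3 * M$2$3 = d * M$1$1" using s1 s2 s3 s4 s5 s6 dd by algebra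
  show "-(M$1$2 * M$3$3 - M$2$3 * M$1$3) = d * M$1$2" using s1 s2 s3 s4 s5 s6 dd by algebra
  show "M$1$2 * M$2$3 - M$2$2 * M$1$3 = d * M$1$3" using s1 s2 s3 s4 s5 s6 dd by algebra
  show "M$1$1 * M$3$3 - M$1$3 * M$1$3 = d * M$2$2" using s1 s2 s3 s4 s5 s6 dd by algebra
  show "-(M$1$1 * M$2$3 - M$1$3 * M$1$2) = d * M$2$3" using s1 s2 s3 s4 s5 s6 dd by algebra
  show "M$1$1 * M$2$2 - M$1$2 * M$1$2 = d * M$3$3" using s1 s2 s3 s4 s5 s6 dd by algebra
qed

lemma curl_alg:
  fixes M :: "real^3^3" and J :: "3 \<Rightarrow> 3 \<Rightarrow> real"
  assumes symM: "\<And>a b. M$a$b = M$b$a"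
    and c1: "M$2$2 * M$3$3 - M$2$3 * M$2$3 = d * M$1$1"
    and c2: "-(M$1$2 * M$3$3 - M$2$3 * M$1$3) = d * M$1$2"
    and c3: "M$1$2 * M$2$3 - M$2$2 * M$1$3 = d * M$1$3"
    and c4: "M$1$1 * M$3$3 - M$1$3 * M$1$3 = d * M$2$2"
    and c5: "-(M$1$1 * M$2$3 - M$1$3 * M$1$2) = d * M$2$3"
    and c6: "M$1$1 * M$2$2 - M$1$2 * M$1$2 = d * M$3$3"
  defines "J' \<equiv> \<lambda>a i. - (\<Sum>c\<in>UNIV. M$a$c * (\<Sum>e\<in>UNIV. M$e$i * J c e))"
  shows "vector [J' 3 2 - J' 2 3, J' 1 3 - J' 3 1, J' 2 1 - J' 1 2]
       = - (d *\<^sub>R (M *v vector [J 3 2 - J 2 3, J 1 3 - J 3 1, J 2 1 - J 1 2]))"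
proof -
  have r21: "M$2$1 = M$1$2" and r31: "M$3$1 = M$1$3" and r32: "M$3$2 = M$2$3" using symM by auto
  show ?thesis
    unfolding vec_eq_iff forall_3 J'_def
    using c1 c2 c3 c4 c5 c6
    apply (simp add: sum_3 matrix_vector_mult_def r21 r31 r32)
    apply (intro conjI; algebra)
    done
qed

lemma Top_sum:
  assumes "finite K"
  shows "Top M Us (\<lambda>y s. \<Sum>k\<in>K. f k y s) x s = (\<Sum>k\<in>K. Top M Us (f k) x s)"
proof -
  have "Top M Us (\<lambda>y s. \<Sum>k\<in>K. f k y s) x s
      = (\<Sum>s'\<in>UNIV. \<Sum>k\<in>K. (\<Prod>j\<in>UNIV. Us (s j) (s' j)) * cnj (f k (Phi M x) s'))"
    unfolding Top_apply by (simp add: sum_distrib_left)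
  also have "\<dots> = (\<Sum>k\<in>K. \<Sum>s'\<in>UNIV. (\<Prod>j\<in>UNIV. Us (s j) (s' j)) * cnj (f k (Phi M x) s'))"
    by (rule sum.swap)
  also have "\<dots> = (\<Sum>k\<in>K. Top M Us (f k) x s)" unfolding Top_apply ..
  finally show ?thesis .
qed

lemma Top_pauliH:
  "Top M Us (pauliH m q A \<psi>) x s =
    (\<Sum>j\<in>UNIV. complex_of_real (1 / (2 * m j)) *
      (Top M Us (\<lambda>x s. \<Sum>k\<in>UNIV. kinmom A (q j) j k (kinmom A (q j) j k \<psi>) x s) x s
       - complex_of_real (q j) * Top M Us (spinB (curl A) j \<psi>) x s))"
proof -
  define U where "U = (\<lambda>s'. \<Prod>j\<in>UNIV. Us (s j) (s' j))"
  define K where "K = (\<lambda>j s'. \<Sum>k\<in>UNIV. kinmom A (q j) j k (kinmom A (q j) j k \<psi>) (Phi M x) s')"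
  define S where "S = (\<lambda>j s'. spinB (curl A) j \<psi> (Phi M x) s')"
  have "Top M Us (pauliH m q A \<psi>) x s
      = (\<Sum>s'\<in>UNIV. U s' * cnj (\<Sum>j\<in>UNIV. complex_of_real (1 / (2 * m j)) * (K j s' - complex_of_real (q j) * S j s')))"
    unfolding Top_apply pauliH_def U_def K_def S_def ..
  also have "\<dots> = (\<Sum>s'\<in>UNIV. \<Sum>j\<in>UNIV. complex_of_real (1 / (2 * m j)) * (U s' * cnj (K j s') - complex_of_real (q j) * (U s' * cnj (S j s'))))"
    by (rule sum.cong[OF refl]) (simp add: sum_distrib_left algebra_simps)
  also have "\<dots> = (\<Sum>j\<in>UNIV. \<Sum>s'\<in>UNIV. complex_of_real (1 / (2 * m j)) * (U s' * cnj (K j s') - complex_of_real (q j) * (U s' * cnj (S j s'))))"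
    by (rule sum.swap)
  also have "\<dots> = (\<Sum>j\<in>UNIV. complex_of_real (1 / (2 * m j)) *
      ((\<Sum>s'\<in>UNIV. U s' * cnj (K j s')) - complex_of_real (q j) * (\<Sum>s'\<in>UNIV. U s' * cnj (S j s'))))"
    by (rule sum.cong[OF refl]) (simp only: sum_distrib_left[symmetric] sum_subtractf)
  also have "\<dots> = (\<Sum>j\<in>UNIV. complex_of_real (1 / (2 * m j)) *
      (Top M Us (\<lambda>x s. \<Sum>k\<in>UNIV. kinmom A (q j) j k (kinmom A (q j) j k \<psi>) x s) x s
       - complex_of_real (q j) * Top M Us (spinB (curl A) j \<psi>) x s))"
    unfolding Top_apply U_def K_def S_def ..
  finally show ?thesis .
qed

lemma sum_swap3:
  "(\<Sum>a\<in>A. \<Sum>k\<in>K. \<Sum>l\<in>L. f a k l) = (\<Sum>l\<in>L. \<Sum>k\<in>K. \<Sum>a\<in>A. f a k l)"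
proof -
  have "(\<Sum>a\<in>A. \<Sum>k\<in>K. \<Sum>l\<in>L. f a k l) = (\<Sum>k\<in>K. \<Sum>a\<in>A. \<Sum>l\<in>L. f a k l)" by (rule sum.swap)
  also have "\<dots> = (\<Sum>k\<in>K. \<Sum>l\<in>L. \<Sum>a\<in>A. f a k l)" by (rule sum.cong[OF refl], rule sum.swap)
  also have "\<dots> = (\<Sum>l\<in>L. \<Sum>k\<in>K. \<Sum>a\<in>A. f a k l)" by (rule sum.swap)
  finally show ?thesis .
qed

lemma spin_cond_lemma:
  fixes Us :: "bool \<Rightarrow> bool \<Rightarrow> complex" and R :: "3 \<Rightarrow> 3 \<Rightarrow> real"
  assumes cR: "\<And>l a c. (\<Sum>k\<in>UNIV. of_real (R k l) * (\<Sum>b\<in>UNIV. Us a b * cnj (pauli k b c))) = - (\<Sum>b\<in>UNIV. pauli l a b * Us b c)"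
    and hb: "\<And>k. \<beta> k = - (\<Sum>l\<in>UNIV. R k l * \<alpha> l)"
  shows "(\<Sum>a\<in>UNIV. Us a0 a * (\<Sum>k\<in>UNIV. of_real (\<beta> k) * cnj (pauli k a c0)))
       = (\<Sum>b\<in>UNIV. (\<Sum>k\<in>UNIV. of_real (\<alpha> k) * pauli k a0 b) * Us b c0)"
proof -
  have "(\<Sum>a\<in>UNIV. Us a0 a * (\<Sum>k\<in>UNIV. of_real (\<beta> k) * cnj (pauli k a c0)))
      = (\<Sum>a\<in>UNIV. \<Sum>k\<in>UNIV. \<Sum>l\<in>UNIV. - (of_real (\<alpha> l) * (of_real (R k l) * (Us a0 a * cnj (pauli k a c0)))))"
    by (simp add: hb sum_distrib_left sum_distrib_right sum_negf algebra_simps)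
  also have "\<dots> = (\<Sum>l\<in>UNIV. \<Sum>k\<in>UNIV. \<Sum>a\<in>UNIV. - (of_real (\<alpha> l) * (of_real (R k l) * (Us a0 a * cnj (pauli k a c0)))))"
    by (rule sum_swap3)
  also have "\<dots> = (\<Sum>l\<in>UNIV. - (of_real (\<alpha> l) * (\<Sum>k\<in>UNIV. of_real (R k l) * (\<Sum>a\<in>UNIV. Us a0 a * cnj (pauli k a c0)))))"
    by (simp add: sum_distrib_left sum_negf)
  also have "\<dots> = (\<Sum>l\<in>UNIV. of_real (\<alpha> l) * (\<Sum>b\<in>UNIV. pauli l a0 b * Us b c0))"
    by (simp add: cR)
  also have "\<dots> = (\<Sum>l\<in>UNIV. \<Sum>b\<in>UNIV. of_real (\<alpha> l) * pauli l a0 b * Us b c0)"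
    by (simp add: sum_distrib_left mult_ac)
  also have "\<dots> = (\<Sum>b\<in>UNIV. \<Sum>l\<in>UNIV. of_real (\<alpha> l) * pauli l a0 b * Us b c0)"
    by (rule sum.swap)
  also have "\<dots> = (\<Sum>b\<in>UNIV. (\<Sum>k\<in>UNIV. of_real (\<alpha> k) * pauli k a0 b) * Us b c0)"
    by (simp add: sum_distrib_right)
  finally show ?thesis .
qed

lemma kin_j:
  fixes \<psi> :: "'n::finite wf"
  assumes MM: "M ** M = mat 1"
    and o2: "\<And>a b. (\<Sum>k\<in>UNIV. M$a$k * M$b$k) = (if a = b then 1 else 0)"
    and o3: "\<And>a b. (\<Sum>k\<in>UNIV. M$k$a * M$b$k) = (if a = b then 1 else 0)"
    and o4: "\<And>a b. (\<Sum>k\<in>UNIV. M$k$a * M$k$b) = (if a = b then 1 else 0)"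
    and sA: "smooth A" and s\<psi>: "\<And>s. smooth (\<lambda>z. \<psi> z s)"
  shows "(\<Sum>k\<in>UNIV. kinmom (\<lambda>z. - (M *v A (M *v z))) q j k (kinmom (\<lambda>z. - (M *v A (M *v z))) q j k (Top M Us \<psi>)) x s)
       = Top M Us (\<lambda>x s. \<Sum>k\<in>UNIV. kinmom A q j k (kinmom A q j k \<psi>) x s) x s"
proof -
  define A' where "A' = (\<lambda>z. - (M *v A (M *v z)))"
  define cB where "cB = (\<lambda>k (z::real^3^'n). complex_of_real (q * (M *v A (z $ j)) $ k))"
  define \<chi>1 where "\<chi>1 = (\<lambda>k y s. \<i> * dirderiv (Phi M (Ej j k)) (\<lambda>w. \<psi> w s) y + cB k y * \<psi> y s)"
  define \<chi>2 where "\<chi>2 = (\<lambda>k y s. \<i> * dirderiv (Phi M (Ej j k)) (\<lambda>w. \<chi>1 k w s) y + cB k y * \<chi>1 k y s)"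
  have ld\<psi>: "ldiff (\<lambda>z. \<psi> z s)" for s using smooth_ldiff[OF s\<psi>] .
  have ldD\<psi>: "ldiff (dirderiv v (\<lambda>z. \<psi> z s))" for v s using smooth_ldiff[OF smooth_dd[OF s\<psi>]] .
  have ldA: "ldiff A" using smooth_ldiff[OF sA] .
  have ldcB: "ldiff (cB k)" for k
    unfolding cB_def using ldiff_coef(1)[OF ldA blin_coef[where N=M and q=q and k=k], where j=j] .
  have coef: "(\<lambda>y s. \<i> * dirderiv (Phi M (Ej j k)) (\<lambda>z. f z s) y - complex_of_real (q * A' (M *v (y $ j)) $ k) * f y s)
      = (\<lambda>y s. \<i> * dirderiv (Phi M (Ej j k)) (\<lambda>z. f z s) y + cB k y * f y s)" for f :: "'n wf" and k
    by (simp add: fun_eq_iff A'_def cB_def MMv[OF MM])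
  have ld\<chi>1: "ldiff (\<lambda>y. \<chi>1 k y s)" for k s
    unfolding \<chi>1_def
    by (rule ldiff_add(1)[OF ldiff_blin(1)[OF ldD\<psi> bounded_linear_mult_right] ldiff_mult(1)[OF ldcB ld\<psi>]])
  have e1: "kinmom A' q j k (Top M Us \<psi>) = Top M Us (\<chi>1 k)" for k
  proof (intro ext)
    fix x s show "kinmom A' q j k (Top M Us \<psi>) x s = Top M Us (\<chi>1 k) x s"
      unfolding Top_kin[OF MM ld\<psi>] coef \<chi>1_def ..
  qed
  have e2: "kinmom A' q j k (Top M Us (\<chi>1 k)) = Top M Us (\<chi>2 k)" for k
  proof (intro ext)
    fix x s show "kinmom A' q j k (Top M Us (\<chi>1 k)) x s = Top M Us (\<chi>2 k) x s"
      unfolding Top_kin[OF MM ld\<chi>1] coef \<chi>2_def ..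
  qed
  have "(\<Sum>k\<in>UNIV. kinmom A' q j k (kinmom A' q j k (Top M Us \<psi>)) x s) = (\<Sum>k\<in>UNIV. Top M Us (\<chi>2 k) x s)"
    by (simp add: e1 e2)
  also have "\<dots> = Top M Us (\<lambda>y s. \<Sum>k\<in>UNIV. \<chi>2 k y s) x s"
    by (rule Top_sum[symmetric]) simp
  also have "(\<lambda>y s. \<Sum>k\<in>UNIV. \<chi>2 k y s) = (\<lambda>x s. \<Sum>k\<in>UNIV. kinmom A q j k (kinmom A q j k \<psi>) x s)"
    by (intro ext) (simp add: kin_point[OF o2 o3 o4 sA s\<psi>] \<chi>2_def \<chi>1_def cB_def)
  finally show ?thesis unfolding A'_def .
qed

lemma spin_j:
  fixes \<psi> :: "'n::finite wf" and B :: "real^3 \<Rightarrow> real^3"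
  assumes MM: "M ** M = mat 1"
    and hB: "\<And>w. B (M *v w) = - (d *\<^sub>R (M *v B w))"
    and cR: "\<And>l a c. (\<Sum>k\<in>UNIV. of_real (d * M$k$l) * (\<Sum>b\<in>UNIV. Us a b * cnj (pauli k b c))) = - (\<Sum>b\<in>UNIV. pauli l a b * Us b c)"
  shows "spinB B j (Top M Us \<psi>) x s = Top M Us (spinB B j \<psi>) x s"
proof -
  define c where "c = (\<lambda>t. cnj (\<psi> (Phi M x) t))"
  define \<alpha> where "\<alpha> = (\<lambda>k. B (x $ j) $ k)"
  define \<beta> where "\<beta> = (\<lambda>k. B (M *v (x $ j)) $ k)"
  have hb: "\<beta> k = - (\<Sum>l\<in>UNIV. d * M$k$l * \<alpha> l)" for k
    unfolding \<beta>_def \<alpha>_def hB by (simp add: matrix_vector_mult_def sum_distrib_left mult_ac)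
  have cond: "\<And>a0 c0. (\<Sum>a\<in>UNIV. Us a0 a * (\<Sum>k\<in>UNIV. of_real (\<beta> k) * cnj (pauli k a c0)))
                        = (\<Sum>b\<in>UNIV. (\<Sum>k\<in>UNIV. of_real (\<alpha> k) * pauli k a0 b) * Us b c0)"
    by (rule spin_cond_lemma[OF cR hb])
  have "Top M Us (spinB B j \<psi>) x s
     = (\<Sum>s'\<in>UNIV. (\<Prod>i\<in>UNIV. Us (s i) (s' i)) *
            (\<Sum>k\<in>UNIV. \<Sum>b\<in>UNIV. of_real (\<beta> k) * cnj (pauli k (s' j) b) * c (s'(j := b))))"
    unfolding Top_apply spinB_def c_def \<beta>_def by (simp add: Phi_nth)
  also have "\<dots> = (\<Sum>k\<in>UNIV. \<Sum>b\<in>UNIV. of_real (\<alpha> k) * pauli k (s j) b *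
            (\<Sum>s'\<in>UNIV. (\<Prod>i\<in>UNIV. Us ((s(j := b)) i) (s' i)) * c s'))"
    by (rule spin_alg[OF cond])
  also have "\<dots> = spinB B j (Top M Us \<psi>) x s"
    unfolding spinB_def Top_apply c_def \<alpha>_def ..
  finally show ?thesis ..
qed

lemma blin_nth: "bounded_linear (\<lambda>w::real^3. w $ a)"
proof -
  have "linear (\<lambda>w::real^3. w $ a)" by (rule linearI) simp_all
  thus ?thesis using linear_conv_bounded_linear by blast
qed

lemma blin_negM: "bounded_linear (\<lambda>w::real^3. - ((M::real^3^3) *v w))"
proof -
  have "linear (\<lambda>w::real^3. - (M *v w))"
    by (rule linearI) (simp_all add: matrix_vector_right_distrib matrix_vector_mult_scaleR)
  thus ?thesis using linear_conv_bounded_linear by blast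
qed

lemma pd3_comp: fixes V :: "real^3 \<Rightarrow> real^3" assumes "ldiff V" shows "pd3 i (\<lambda>y. V y $ a) x = dirderiv (axis i 1) V x $ a"
  unfolding pd3_def using ldiff_blin(2)[OF assms blin_nth] by simp

lemma linM: "linear (\<lambda>z::real^3. (M::real^3^3) *v z)" by simp

lemma smooth_A':
  fixes A :: "real^3 \<Rightarrow> real^3" and M :: "real^3^3"
  assumes "smooth A" shows "smooth (\<lambda>z. - (M *v A (M *v z)))"
proof -
  have "smooth (\<lambda>z. A (M *v z))" by (rule smooth_comp_lin[OF assms linM[of M]])
  from smooth_blin[OF this blin_negM] show ?thesis .
qed

lemma DA':
  fixes A :: "real^3 \<Rightarrow> real^3" and M :: "real^3^3"
  assumes "ldiff A"
  shows "dirderiv v (\<lambda>z. - (M *v A (M *v z))) x = - (M *v dirderiv (M *v v) A (M *v x))"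
proof -
  have l: "ldiff (\<lambda>z. A (M *v z))" by (rule ldiff_comp_lin[OF assms linM[of M]])
  have "dirderiv v (\<lambda>z. - (M *v A (M *v z))) x = - (M *v dirderiv v (\<lambda>z. A (M *v z)) x)"
    using ldiff_blin(2)[OF l blin_negM] by simp
  also have "dirderiv v (\<lambda>z. A (M *v z)) x = dirderiv (M *v v) A (M *v x)"
    using dirderiv_comp_lin[OF linM[of M], of v A x] by simp
  finally show ?thesis .
qed

lemma curl_A':
  fixes A :: "real^3 \<Rightarrow> real^3" and M :: "real^3^3"
  assumes sA: "smooth A" and symM: "\<And>a b. M$a$b = M$b$a"
    and c1: "M$2$2 * M$3$3 - M$2$3 * M$2$3 = det M * M$1$1"
    and c2: "-(M$1$2 * M$3$3 - M$2$3 * M$1$3) = det M * M$1$2"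
    and c3: "M$1$2 * M$2$3 - M$2$2 * M$1$3 = det M * M$1$3"
    and c4: "M$1$1 * M$3$3 - M$1$3 * M$1$3 = det M * M$2$2"
    and c5: "-(M$1$1 * M$2$3 - M$1$3 * M$1$2) = det M * M$2$3"
    and c6: "M$1$1 * M$2$2 - M$1$2 * M$1$2 = det M * M$3$3"
    and hyp: "\<And>x. det M *\<^sub>R (M *v curl A (M *v x)) = - curl A x"
  shows "curl (\<lambda>z. - (M *v A (M *v z))) x = curl A x"
proof -
  have ldA: "ldiff A" using smooth_ldiff[OF sA] .
  have ldA': "ldiff (\<lambda>z. - (M *v A (M *v z)))" using smooth_ldiff[OF smooth_A'[OF sA]] .
  define J where "J = (\<lambda>c e. dirderiv (axis e 1) A (M *v x) $ c)"
  define J' where "J' = (\<lambda>a i. - (\<Sum>c\<in>UNIV. M$a$c * (\<Sum>e\<in>UNIV. M$e$i * J c e)))"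
  have cA': "pd3 i (\<lambda>y. (- (M *v A (M *v y))) $ a) x = J' a i" for i a
    unfolding pd3_comp[OF ldA'] DA'[OF ldA] dA_expand[OF sA] J'_def J_def
    by (simp add: matrix_vector_mult_def sum_component)
  have cA: "pd3 i (\<lambda>y. A y $ a) (M *v x) = J a i" for i a
    unfolding pd3_comp[OF ldA] J_def ..
  have "curl (\<lambda>z. - (M *v A (M *v z))) x = vector [J' 3 2 - J' 2 3, J' 1 3 - J' 3 1, J' 2 1 - J' 1 2]"
    unfolding curl_def cA' ..
  also have "\<dots> = - (det M *\<^sub>R (M *v vector [J 3 2 - J 2 3, J 1 3 - J 3 1, J 2 1 - J 1 2]))"
    unfolding J'_def by (rule curl_alg[OF symM c1 c2 c3 c4 c5 c6])
  also have "vector [J 3 2 - J 2 3, J 1 3 - J 3 1, J 2 1 - J 1 2] = curl A (M *v x)"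
    unfolding curl_def cA ..
  also have "- (det M *\<^sub>R (M *v curl A (M *v x))) = curl A x" using hyp[of x] by simp
  finally show ?thesis .
qed

lemma vec_expand: "u = (\<Sum>b\<in>UNIV. u $ b *\<^sub>R axis b (1::real))"
  by (simp add: vec_eq_iff sum_component axis_def if_distrib[of "\<lambda>z. _ * z"] cong: if_cong)

lemma lin_expand:
  fixes f :: "real^'n::finite \<Rightarrow> 'b::real_vector"
  assumes "linear f"
  shows "f u = (\<Sum>b\<in>UNIV. u $ b *\<^sub>R f (axis b 1))"
proof -
  have "f u = f (\<Sum>b\<in>UNIV. u $ b *\<^sub>R axis b (1::real))"
    by (rule arg_cong[of _ _ f], rule vec_expand)
  also have "\<dots> = (\<Sum>b\<in>UNIV. u $ b *\<^sub>R f (axis b 1))"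
    by (simp add: linear_sum[OF assms] linear_scale[OF assms])
  finally show ?thesis .
qed

lemma gauge:
  fixes A :: "real^3 \<Rightarrow> real^3" and M :: "real^3^3"
  assumes sA: "smooth A" and cE: "\<And>x. curl (\<lambda>z. - (M *v A (M *v z))) x = curl A x"
  shows "\<exists>G. smooth G \<and> (\<lambda>y. A y + grad G y) = (\<lambda>z. - (M *v A (M *v z)))"
proof -
  define A' where "A' = (\<lambda>z. - (M *v A (M *v z)))"
  have sA': "smooth A'" unfolding A'_def by (rule smooth_A'[OF sA])
  have blm: "bounded_linear (\<lambda>w::real^3. - w)" by (rule bounded_linear_minus[OF bounded_linear_ident])
  have smA: "smooth (\<lambda>z. - A z)" by (rule smooth_blin[OF sA blm])
  define F where "F = (\<lambda>z. A' z + - A z)"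
  have sF: "smooth F" unfolding F_def by (rule smooth_add[OF sA' smA])
  have ldA: "ldiff A" using smooth_ldiff[OF sA] .
  have ldA': "ldiff A'" using smooth_ldiff[OF sA'] .
  have ldmA: "ldiff (\<lambda>z. - A z)" using smooth_ldiff[OF smA] .
  define JF where "JF = (\<lambda>x a b. dirderiv (axis b 1) F x $ a)"
  have JFe: "JF x a b = dirderiv (axis b 1) A' x $ a - dirderiv (axis b 1) A x $ a" for x a b
    unfolding JF_def F_def ldiff_add(2)[OF ldA' ldmA] ldiff_blin(2)[OF ldA blm] by simp
  have symF: "JF x a b = JF x b a" for x a b
  proof -
    have "curl A' x = curl A x" using cE unfolding A'_def .
    hence "vector [dirderiv (axis 2 1) A' x $ 3 - dirderiv (axis 3 1) A' x $ 2,
                   dirderiv (axis 3 1) A' x $ 1 - dirderiv (axis 1 1) A' x $ 3,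
                   dirderiv (axis 1 1) A' x $ 2 - dirderiv (axis 2 1) A' x $ 1]
         = (vector [dirderiv (axis 2 1) A x $ 3 - dirderiv (axis 3 1) A x $ 2,
                   dirderiv (axis 3 1) A x $ 1 - dirderiv (axis 1 1) A x $ 3,
                   dirderiv (axis 1 1) A x $ 2 - dirderiv (axis 2 1) A x $ 1] :: real^3)"
      unfolding curl_def pd3_comp[OF ldA'] pd3_comp[OF ldA] .
    hence "\<forall>a b. JF x a b = JF x b a"
      unfolding vec_eq_iff forall_3 JFe by simp
    thus ?thesis by blast
  qed
  have dexp: "dirderiv u F x = (\<Sum>b\<in>UNIV. u $ b *\<^sub>R dirderiv (axis b 1) F x)" for u x
    by (rule lin_expand[OF smooth_linear[OF sF]])
  have iexp: "dirderiv u F x \<bullet> w = (\<Sum>b\<in>UNIV. \<Sum>a\<in>UNIV. u $ b * JF x a b * w $ a)" for u w x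
  proof -
    have "dirderiv u F x \<bullet> w = (\<Sum>b\<in>UNIV. u $ b *\<^sub>R dirderiv (axis b 1) F x) \<bullet> w"
      by (rule arg_cong[where f="\<lambda>z. z \<bullet> w"], rule dexp)
    also have "\<dots> = (\<Sum>i\<in>UNIV. \<Sum>n\<in>UNIV. u $ n * (w $ i * dirderiv (axis n 1) F x $ i))"
      by (simp add: inner_sum_left inner_vec_def sum_distrib_left mult_ac)
    also have "\<dots> = (\<Sum>n\<in>UNIV. \<Sum>i\<in>UNIV. u $ n * (w $ i * dirderiv (axis n 1) F x $ i))"
      by (rule sum.swap)
    also have "\<dots> = (\<Sum>b\<in>UNIV. \<Sum>a\<in>UNIV. u $ b * JF x a b * w $ a)"
      by (simp add: JF_def mult_ac)
    finally show ?thesis .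
  qed
  have sym: "dirderiv u F x \<bullet> w = dirderiv w F x \<bullet> u" for x u w
  proof -
    have "(\<Sum>b\<in>UNIV. \<Sum>a\<in>UNIV. u $ b * JF x a b * w $ a) = (\<Sum>b\<in>UNIV. \<Sum>a\<in>UNIV. w $ a * JF x b a * u $ b)"
      by (intro sum.cong refl) (simp add: symF[of x _ _] mult_ac)
    also have "\<dots> = (\<Sum>a\<in>UNIV. \<Sum>b\<in>UNIV. w $ a * JF x b a * u $ b)" by (rule sum.swap)
    finally show ?thesis unfolding iexp .
  qed
  define G where "G = (\<lambda>x. integral (cbox 0 (1::real)) (\<lambda>t. F (t *\<^sub>R x) \<bullet> x))"
  have sG: "smooth G" unfolding G_def by (rule poincare_smooth[OF sF sym])
  have dG: "dirderiv v G x = F x \<bullet> v" for v x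
    unfolding G_def by (rule dirderiv_eqI[OF poincare_hvd[OF sF sym]])
  have AG: "(\<lambda>y. A y + grad G y) = A'"
  proof (rule ext)
    fix y
    have "grad G y = F y"
      by (simp add: vec_eq_iff grad_def pd3_def dG inner_axis)
    thus "A y + grad G y = A' y" by (simp add: F_def)
  qed
  show ?thesis
    by (rule exI[of _ G], rule conjI[OF sG], unfold AG A'_def, rule refl)
qed

lemma Us_exists:
  fixes M :: "real^3^3"
  assumes symM: "\<And>a b. M$a$b = M$b$a"
    and o1: "\<And>a b. (\<Sum>k\<in>UNIV. M$a$k * M$k$b) = (if a = b then 1 else 0)"
    and dd: "det M * det M = 1"
  shows "\<exists>Us. unitary2 Us \<and> (\<forall>l a c. (\<Sum>k\<in>UNIV. of_real (det M * M$k$l) * (\<Sum>b\<in>UNIV. Us a b * cnj (pauli k b c)))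
                                     = - (\<Sum>b\<in>UNIV. pauli l a b * Us b c))"
proof -
  define d where "d = det M"
  define r where "r = (\<lambda>k l. d * M$k$l)"
  have rs: "r a b = r b a" for a b unfolding r_def using symM by simp
  have rq: "(\<Sum>k\<in>UNIV. r a k * r k b) = (if a = b then 1 else 0)" for a b
  proof -
    have "(\<Sum>k\<in>UNIV. r a k * r k b) = (d * d) * (\<Sum>k\<in>UNIV. M$a$k * M$k$b)"
      unfolding r_def by (simp add: sum_distrib_left mult_ac)
    thus ?thesis using o1 dd unfolding d_def by simp
  qed
  have dM: "d = M$1$1 * M$2$2 * M$3$3 + M$1$2 * M$2$3 * M$3$1 + M$1$3 * M$2$1 * M$3$2
      - M$1$1 * M$2$3 * M$3$2 - M$1$2 * M$2$1 * M$3$3 - M$1$3 * M$2$2 * M$3$1"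
    unfolding d_def det_3 ..
  have d2: "d * d = 1" using dd unfolding d_def .
  have rd: "r 1 1 * r 2 2 * r 3 3 + r 1 2 * r 2 3 * r 3 1 + r 1 3 * r 2 1 * r 3 2
              - r 1 1 * r 2 3 * r 3 2 - r 1 2 * r 2 1 * r 3 3 - r 1 3 * r 2 2 * r 3 1 = 1"
    unfolding r_def using dM d2 by algebra
  from classify[OF rs rq rd] show ?thesis
  proof
    assume h: "\<forall>a b. r a b = (if a = b then 1 else 0)"
    show ?thesis
    proof (intro exI[of _ UsJ] conjI allI)
      show "unitary2 UsJ" by (rule unitary_UsJ)
      fix l a c
      have "(\<Sum>k\<in>UNIV. of_real (det M * M$k$l) * (\<Sum>b\<in>UNIV. UsJ a b * cnj (pauli k b c)))
          = (\<Sum>k\<in>UNIV. of_real (if k = l then 1 else 0) * (\<Sum>b\<in>UNIV. UsJ a b * cnj (pauli k b c)))"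
        using h unfolding r_def d_def by simp
      also have "\<dots> = - (\<Sum>b\<in>UNIV. pauli l a b * UsJ b c)" by (rule cond_UsJ)
      finally show "(\<Sum>k\<in>UNIV. of_real (det M * M$k$l) * (\<Sum>b\<in>UNIV. UsJ a b * cnj (pauli k b c)))
          = - (\<Sum>b\<in>UNIV. pauli l a b * UsJ b c)" .
    qed
  next
    assume "\<exists>n. n 1 * n 1 + n 2 * n 2 + n 3 * n 3 = 1 \<and> (\<forall>k l. r k l = 2 * n k * n l - (if k = l then 1 else 0))"
    then obtain n where n1: "n 1 * n 1 + n 2 * n 2 + n 3 * n 3 = 1"
      and n2: "\<forall>k l. r k l = 2 * n k * n l - (if k = l then 1 else 0)" by blast
    show ?thesis
    proof (intro exI[of _ "UsN (n 1) (n 2) (n 3)"] conjI allI)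
      show "unitary2 (UsN (n 1) (n 2) (n 3))" by (rule unitary_UsN[OF n1])
      fix l a c
      have "(\<Sum>k\<in>UNIV. of_real (det M * M$k$l) * (\<Sum>b\<in>UNIV. UsN (n 1) (n 2) (n 3) a b * cnj (pauli k b c)))
          = (\<Sum>k\<in>UNIV. of_real (2 * n k * n l - (if k = l then 1 else 0)) * (\<Sum>b\<in>UNIV. UsN (n 1) (n 2) (n 3) a b * cnj (pauli k b c)))"
        using n2 unfolding r_def d_def by simp
      also have "\<dots> = - (\<Sum>b\<in>UNIV. pauli l a b * UsN (n 1) (n 2) (n 3) b c)" by (rule cond_UsN[OF n1])
      finally show "(\<Sum>k\<in>UNIV. of_real (det M * M$k$l) * (\<Sum>b\<in>UNIV. UsN (n 1) (n 2) (n 3) a b * cnj (pauli k b c)))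
          = - (\<Sum>b\<in>UNIV. pauli l a b * UsN (n 1) (n 2) (n 3) b c)" .
    qed
  qed
qed

theorem theorem2p10:
  fixes m q :: "'n::finite \<Rightarrow> real"
    and A :: "real^3 \<Rightarrow> real^3"
    and M :: "real^3^3"
  assumes "\<forall>j. m j > 0"
    and "smooth A"
    and "orthogonal_matrix M"
    and "M ** M = mat 1"
    and "\<forall>x. det M *\<^sub>R (M *v curl A (M *v x)) = - curl A x"
  shows "\<exists>Us. unitary2 Us \<and>
           (\<exists>G :: real^3 \<Rightarrow> real. smooth G \<and>
              (\<forall>\<psi> :: 'n wf. (\<forall>s. smooth (\<lambda>x. \<psi> x s)) \<longrightarrow>
                 Top M Us (pauliH m q A \<psi>) = pauliH m q (\<lambda>y. A y + grad G y) (Top M Us \<psi>)))"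
proof -
  note sA = assms(2) and orth = assms(3) and MM = assms(4)
  have hyp: "\<And>x. det M *\<^sub>R (M *v curl A (M *v x)) = - curl A x" using assms(5) by blast
  note symM = Mfacts(1)[OF orth MM] and o1 = Mfacts(2)[OF orth MM]
    and o2 = Mfacts(3)[OF orth MM] and o3 = Mfacts(4)[OF orth MM]
    and o4 = Mfacts(5)[OF orth MM] and dd = Mfacts(6)[OF orth MM]
  note cof = cofactors[OF symM o1]
  have curlE: "\<And>x. curl (\<lambda>z. - (M *v A (M *v z))) x = curl A x"
    by (rule curl_A'[OF sA symM cof hyp])
  have curlE': "curl (\<lambda>z. - (M *v A (M *v z))) = curl A" using curlE by (rule ext)
  obtain G where sG: "smooth G" and AG: "(\<lambda>y. A y + grad G y) = (\<lambda>z. - (M *v A (M *v z)))"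
    using gauge[OF sA curlE] by blast
  obtain Us where uU: "unitary2 Us"
    and cR: "\<forall>l a c. (\<Sum>k\<in>UNIV. of_real (det M * M$k$l) * (\<Sum>b\<in>UNIV. Us a b * cnj (pauli k b c)))
                                     = - (\<Sum>b\<in>UNIV. pauli l a b * Us b c)"
    using Us_exists[OF symM o1 dd] by blast
  have hB: "curl A (M *v w) = - (det M *\<^sub>R (M *v curl A w))" for w
    using hyp[of "M *v w"] by (simp add: MMv[OF MM])
  show ?thesis
  proof (intro exI[of _ Us] conjI uU exI[of _ G] sG allI impI)
    fix \<psi> :: "'n wf"
    assume s\<psi>: "\<forall>s. smooth (\<lambda>x. \<psi> x s)"
    have s\<psi>': "\<And>s. smooth (\<lambda>x. \<psi> x s)" using s\<psi> by blast
    show "Top M Us (pauliH m q A \<psi>) = pauliH m q (\<lambda>y. A y + grad G y) (Top M Us \<psi>)"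
    proof (intro ext)
      fix x s
      have K: "(\<Sum>k\<in>UNIV. kinmom (\<lambda>z. - (M *v A (M *v z))) (q j) j k (kinmom (\<lambda>z. - (M *v A (M *v z))) (q j) j k (Top M Us \<psi>)) x s)
          = Top M Us (\<lambda>x s. \<Sum>k\<in>UNIV. kinmom A (q j) j k (kinmom A (q j) j k \<psi>) x s) x s" for j
        by (rule kin_j[OF MM o2 o3 o4 sA s\<psi>'])
      have S: "spinB (curl A) j (Top M Us \<psi>) x s = Top M Us (spinB (curl A) j \<psi>) x s" for j
        by (rule spin_j[where B="curl A" and d="det M", OF MM hB]) (use cR in blast)
      show "Top M Us (pauliH m q A \<psi>) x s = pauliH m q (\<lambda>y. A y + grad G y) (Top M Us \<psi>) x s"
        unfolding Top_pauliH AG pauliH_def curlE' K S ..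
    qed
  qed
qed

end
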